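(* Let $k\ge 1$ be an integer and let $G$ be a finite abelian group with primary decomposition $G\cong\bigoplus_i (\mathbb{Z}_{p_i^{r_i}})^{d_i}$, where the pairs $(p_i,r_i)$ (with $p_i$ prime, $r_i\ge 1$) are pairwise distinct and $d_i\ge 1$ is the multiplicity of the cyclic summand $\mathbb{Z}_{p_i^{r_i}}$. Suppose that at least one of the following conditions holds: 1) for every $i$ with $p_i=2$ or $p_i=3$ we have $d_i\ge 2$ (no restriction on $d_i$ for $p_i>3$); 2) no $p_i$ equals $2$, and $k$ is even; 3) for every $i$ with $p_i=2$ we have $d_i\ge 2$, and $k$ is divisible by $4$; 4) for every $i$ with $p_i=2$ we have $d_i\ge 3$, and $k$ is even; 5) for every $i$ with $p_i=2$ we have $d_i\ge 2$ and $d_i\ne 3$, and $k$ is even with $k\ge 4$. Then the restricted wreath product $G\wr\mathbb{Z}^k$ admits an automorphism $\varphi$ with finite Reidemeister number $R(\varphi)<\infty$; that is, $G\wr\mathbb{Z}^k$ does not have the $R_\infty$ property.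
   Context: For a group $\Gamma$ and an automorphism $\varphi:\Gamma\to\Gamma$, the Reidemeister (twisted conjugacy) classes of $\varphi$ are the classes of the equivalence relation $x\sim gx\varphi(g^{-1})$ ($g\in\Gamma$), and the Reidemeister number $R(\varphi)$ is the number of these classes (possibly infinite). A group has the $R_\infty$ property if every automorphism of it has $R(\varphi)=\infty$. The restricted wreath product $G\wr\mathbb{Z}^k$ is the semidirect product $\Sigma\rtimes_\alpha\mathbb{Z}^k$, where $\Sigma=\bigoplus_{x\in\mathbb{Z}^k}G_x$ is the direct sum of copies $G_x\cong G$ and $\mathbb{Z}^k$ acts by shifting indices: $\alpha(x)(g_y)=g_{x+y}$. *)

theory Defs
  imports "HOL-Algebra.Algebra" "HOL-Computational_Algebra.Primes"
begin

text \<open>The free abelian group Z^k, realised as integer vectors indexed by nat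
  that vanish at every index >= k.\<close>
definition Zk :: "nat \<Rightarrow> (nat \<Rightarrow> int) set" where
  "Zk k = {v. \<forall>i\<ge>k. v i = 0}"

text \<open>Restricted wreath product G wr Z^k = (direct sum over x in Z^k of G_x) semidirect Z^k,
  where Z^k acts by shifting indices: alpha(x)(g_y) = g_(x+y), i.e.
  (alpha(x) f)(z) = f(z - x).\<close>
definition wreath_Zk :: "('a, 'b) monoid_scheme \<Rightarrow> nat \<Rightarrow> (((nat \<Rightarrow> int) \<Rightarrow> 'a) \<times> (nat \<Rightarrow> int)) monoid" where
  "wreath_Zk G k =
    \<lparr> carrier = {(f, x). x \<in> Zk k \<and> (\<forall>z. f z \<in> carrier G)
                   \<and> (\<forall>z. z \<notin> Zk k \<longrightarrow> f z = \<one>\<^bsub>G\<^esub>)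
                   \<and> finite {z. f z \<noteq> \<one>\<^bsub>G\<^esub>}},
      monoid.mult = (\<lambda>(f, x) (g, y). (\<lambda>z. f z \<otimes>\<^bsub>G\<^esub> g (\<lambda>i. z i - x i), \<lambda>i. x i + y i)),
      one = (\<lambda>z. \<one>\<^bsub>G\<^esub>, \<lambda>i. 0) \<rparr>"

definition reid_rel :: "('a, 'b) monoid_scheme \<Rightarrow> ('a \<Rightarrow> 'a) \<Rightarrow> ('a \<times> 'a) set" where
  "reid_rel G \<phi> = {(x, y). x \<in> carrier G \<and> y \<in> carrier G \<and>
      (\<exists>g\<in>carrier G. y = g \<otimes>\<^bsub>G\<^esub> x \<otimes>\<^bsub>G\<^esub> \<phi> (inv\<^bsub>G\<^esub> g))}"

definition finite_reidemeister :: "('a, 'b) monoid_scheme \<Rightarrow> ('a \<Rightarrow> 'a) \<Rightarrow> bool" where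
  "finite_reidemeister G \<phi> \<longleftrightarrow> finite (carrier G // reid_rel G \<phi>)"

end

theory Submission
  imports Defs
begin


lemma Zk_add: "x \<in> Zk k \<Longrightarrow> y \<in> Zk k \<Longrightarrow> (\<lambda>i. x i + y i) \<in> Zk k"
  by (auto simp: Zk_def)
lemma Zk_diff: "x \<in> Zk k \<Longrightarrow> y \<in> Zk k \<Longrightarrow> (\<lambda>i. x i - y i) \<in> Zk k"
  by (auto simp: Zk_def)
lemma Zk_uminus: "x \<in> Zk k \<Longrightarrow> (\<lambda>i. - x i) \<in> Zk k"
  by (auto simp: Zk_def)
lemma Zk_zero: "(\<lambda>i. 0) \<in> Zk k"
  by (auto simp: Zk_def)
lemma Zk_diff_notin: "z \<notin> Zk k \<Longrightarrow> x \<in> Zk k \<Longrightarrow> (\<lambda>i. z i - x i) \<notin> Zk k"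
  by (auto simp: Zk_def)
lemma Zk_add_notin: "z \<notin> Zk k \<Longrightarrow> x \<in> Zk k \<Longrightarrow> (\<lambda>i. z i + x i) \<notin> Zk k"
  by (auto simp: Zk_def)

lemma carrier_W: "(f, x) \<in> carrier (wreath_Zk G k) \<longleftrightarrow>
   x \<in> Zk k \<and> (\<forall>z. f z \<in> carrier G) \<and> (\<forall>z. z \<notin> Zk k \<longrightarrow> f z = \<one>\<^bsub>G\<^esub>)
                   \<and> finite {z. f z \<noteq> \<one>\<^bsub>G\<^esub>}"
  by (simp add: wreath_Zk_def)

lemma mult_W: "(f, x) \<otimes>\<^bsub>wreath_Zk G k\<^esub> (g, y) = (\<lambda>z. f z \<otimes>\<^bsub>G\<^esub> g (\<lambda>i. z i - x i), \<lambda>i. x i + y i)"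
  by (simp add: wreath_Zk_def)

lemma one_W: "\<one>\<^bsub>wreath_Zk G k\<^esub> = (\<lambda>z. \<one>\<^bsub>G\<^esub>, \<lambda>i. 0)"
  by (simp add: wreath_Zk_def)

lemma finite_shift: "finite {z. g z \<noteq> c} \<Longrightarrow> finite {z. g (\<lambda>i. z i - (x::nat\<Rightarrow>int) i) \<noteq> c}"
proof -
  assume a: "finite {z. g z \<noteq> c}"
  have "{z. g (\<lambda>i. z i - x i) \<noteq> c} = (\<lambda>z i. z i - x i) -` {z. g z \<noteq> c}" by auto
  moreover have "inj (\<lambda>(z::nat\<Rightarrow>int) i. z i - x i)"
    by (auto simp: inj_def fun_eq_iff)
  ultimately have "finite ((\<lambda>z i. z i - x i) -` {z. g z \<noteq> c})" using a by (metis finite_vimageI)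
  then show ?thesis by (simp only: \<open>{z. g (\<lambda>i. z i - x i) \<noteq> c} = _\<close>[symmetric])
qed

lemma (in group) wreath_group: "group (wreath_Zk G k)"
proof (rule groupI)
  fix a b assume A: "a \<in> carrier (wreath_Zk G k)" "b \<in> carrier (wreath_Zk G k)"
  obtain f x where a: "a = (f, x)" by fastforce
  obtain g y where b: "b = (g, y)" by fastforce
  have s: "{z. f z \<otimes> g (\<lambda>i. z i - x i) \<noteq> \<one>} \<subseteq> {z. f z \<noteq> \<one>} \<union> {z. g (\<lambda>i. z i - x i) \<noteq> \<one>}"
    using A a b by (auto simp: carrier_W)
  show "a \<otimes>\<^bsub>wreath_Zk G k\<^esub> b \<in> carrier (wreath_Zk G k)"
    using A unfolding a b mult_W carrier_W
    using finite_subset[OF s] finite_shift[of g \<one> x] Zk_diff_notin[of _ k x]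
    by (auto simp: Zk_add)
next
  show "\<one>\<^bsub>wreath_Zk G k\<^esub> \<in> carrier (wreath_Zk G k)"
    by (simp add: one_W carrier_W Zk_zero)
next
  fix a b c assume A: "a \<in> carrier (wreath_Zk G k)" "b \<in> carrier (wreath_Zk G k)" "c \<in> carrier (wreath_Zk G k)"
  obtain f x where a: "a = (f, x)" by fastforce
  obtain g y where b: "b = (g, y)" by fastforce
  obtain h w where c: "c = (h, w)" by fastforce
  have e: "\<And>z. (\<lambda>i. z i - (x i + y i)) = (\<lambda>i. z i - x i - y i)" by (auto simp: algebra_simps)
  show "a \<otimes>\<^bsub>wreath_Zk G k\<^esub> b \<otimes>\<^bsub>wreath_Zk G k\<^esub> c = a \<otimes>\<^bsub>wreath_Zk G k\<^esub> (b \<otimes>\<^bsub>wreath_Zk G k\<^esub> c)"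
    using A unfolding a b c mult_W carrier_W
    by (auto simp: e m_assoc add.assoc)
next
  fix a assume A: "a \<in> carrier (wreath_Zk G k)"
  obtain f x where a: "a = (f, x)" by fastforce
  show "\<one>\<^bsub>wreath_Zk G k\<^esub> \<otimes>\<^bsub>wreath_Zk G k\<^esub> a = a"
    using A unfolding a mult_W carrier_W one_W by auto
next
  fix a assume A: "a \<in> carrier (wreath_Zk G k)"
  obtain f x where a: "a = (f, x)" by fastforce
  let ?b = "(\<lambda>z. inv f (\<lambda>i. z i + x i), \<lambda>i. - x i)"
  have fin: "finite {z. inv f (\<lambda>i. z i + x i) \<noteq> \<one>}"
  proof -
    have "{z. inv f (\<lambda>i. z i + x i) \<noteq> \<one>} \<subseteq> {z. f (\<lambda>i. z i - (- x i)) \<noteq> \<one>}"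
      using A a by (auto simp: carrier_W)
    then show ?thesis using finite_shift[of f \<one> "\<lambda>i. - x i"] A a
      by (auto simp: carrier_W intro: finite_subset)
  qed
  have "?b \<in> carrier (wreath_Zk G k)"
    using A a fin by (auto simp: carrier_W Zk_uminus Zk_add_notin)
  moreover have "?b \<otimes>\<^bsub>wreath_Zk G k\<^esub> a = \<one>\<^bsub>wreath_Zk G k\<^esub>"
  proof -
    have "\<And>z. (\<lambda>i. z i - - x i) = (\<lambda>i. z i + x i)" by auto
    then show ?thesis using A a by (auto simp: carrier_W mult_W one_W fun_eq_iff)
  qed
  ultimately show "\<exists>b\<in>carrier (wreath_Zk G k). b \<otimes>\<^bsub>wreath_Zk G k\<^esub> a = \<one>\<^bsub>wreath_Zk G k\<^esub>"
    by blast
qed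


lemma reid_equiv:
  assumes H: "group H" and phi: "\<phi> \<in> hom H H"
  shows "equiv (carrier H) (reid_rel H \<phi>)"
proof -
  interpret H: group H by (rule H)
  interpret h: group_hom H H \<phi> using H phi by (simp add: group_hom_def group_hom_axioms_def)
  show ?thesis
  proof (rule equivI)
    show "reid_rel H \<phi> \<subseteq> carrier H \<times> carrier H" by (auto simp: reid_rel_def)
  next
    show "refl_on (carrier H) (reid_rel H \<phi>)"
    proof (rule refl_onI)
      fix x assume "x \<in> carrier H"
      then show "(x, x) \<in> reid_rel H \<phi>" unfolding reid_rel_def
        by (auto intro!: bexI[of _ "\<one>\<^bsub>H\<^esub>"])
    qed
  next
    show "sym (reid_rel H \<phi>)"
    proof (rule symI)
      fix a b assume "(a, b) \<in> reid_rel H \<phi>"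
      then obtain g where a: "a \<in> carrier H" "b \<in> carrier H" "g \<in> carrier H"
        and b: "b = g \<otimes>\<^bsub>H\<^esub> a \<otimes>\<^bsub>H\<^esub> \<phi> (inv\<^bsub>H\<^esub> g)"
        by (auto simp: reid_rel_def)
      have "inv\<^bsub>H\<^esub> g \<otimes>\<^bsub>H\<^esub> b \<otimes>\<^bsub>H\<^esub> \<phi> (inv\<^bsub>H\<^esub> (inv\<^bsub>H\<^esub> g)) = a"
        using a unfolding b by (simp add: H.m_assoc h.hom_inv h.hom_closed) (metis H.l_inv H.m_assoc H.l_one H.inv_closed)
      then show "(b, a) \<in> reid_rel H \<phi>" using a unfolding reid_rel_def
        by (auto intro!: bexI[of _ "inv\<^bsub>H\<^esub> g"])
    qed
  next
    show "trans (reid_rel H \<phi>)"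
    proof (rule transI)
      fix a b c assume "(a, b) \<in> reid_rel H \<phi>" "(b, c) \<in> reid_rel H \<phi>"
      then obtain g h where a: "a \<in> carrier H" "b \<in> carrier H" "c \<in> carrier H" "g \<in> carrier H" "h \<in> carrier H"
        and b: "b = g \<otimes>\<^bsub>H\<^esub> a \<otimes>\<^bsub>H\<^esub> \<phi> (inv\<^bsub>H\<^esub> g)"
        and c: "c = h \<otimes>\<^bsub>H\<^esub> b \<otimes>\<^bsub>H\<^esub> \<phi> (inv\<^bsub>H\<^esub> h)"
        by (auto simp: reid_rel_def)
      have "c = (h \<otimes>\<^bsub>H\<^esub> g) \<otimes>\<^bsub>H\<^esub> a \<otimes>\<^bsub>H\<^esub> \<phi> (inv\<^bsub>H\<^esub> (h \<otimes>\<^bsub>H\<^esub> g))"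
        using a unfolding c b by (simp add: H.m_assoc h.hom_inv h.hom_closed H.inv_mult_group h.hom_mult)
      then show "(a, c) \<in> reid_rel H \<phi>" using a unfolding reid_rel_def
        by (auto intro!: bexI[of _ "h \<otimes>\<^bsub>H\<^esub> g"])
    qed
  qed
qed


primrec prodG :: "('a, 'b) monoid_scheme \<Rightarrow> (nat \<Rightarrow> 'a) \<Rightarrow> nat \<Rightarrow> 'a" where
  "prodG G a 0 = \<one>\<^bsub>G\<^esub>"
| "prodG G a (Suc j) = prodG G a j \<otimes>\<^bsub>G\<^esub> a j"

context comm_group
begin

lemma prodG_closed: "(\<And>j. a j \<in> carrier G) \<Longrightarrow> prodG G a n \<in> carrier G"
  by (induction n) auto

lemma prodG_shift: "(\<And>j. a j \<in> carrier G) \<Longrightarrow> prodG G a (Suc n) = a 0 \<otimes> prodG G (\<lambda>j. a (Suc j)) n"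
proof (induction n)
  case 0 then show ?case by simp
next
  case (Suc n)
  have "prodG G a (Suc (Suc n)) = prodG G a (Suc n) \<otimes> a (Suc n)" by simp
  also have "\<dots> = (a 0 \<otimes> prodG G (\<lambda>j. a (Suc j)) n) \<otimes> a (Suc n)" using Suc by simp
  also have "\<dots> = a 0 \<otimes> prodG G (\<lambda>j. a (Suc j)) (Suc n)"
    using Suc.prems by (simp add: m_assoc prodG_closed)
  finally show ?case .
qed

lemma prodG_hom: "h \<in> hom G G \<Longrightarrow> (\<And>j. a j \<in> carrier G) \<Longrightarrow> h (prodG G a n) = prodG G (\<lambda>j. h (a j)) n"
proof (induction n)
  case 0 then show ?case by (simp add: hom_one)
next
  case (Suc n) then show ?case by (simp add: hom_mult prodG_closed)
qed

lemma prodG_one: "(\<And>j. j < n \<Longrightarrow> a j = \<one>) \<Longrightarrow> prodG G a n = \<one>"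
  by (induction n) auto

end

locale wsetup = comm_group G for G (structure) +
  fixes k m :: nat and \<psi> :: "'a \<Rightarrow> 'a" and M :: "(nat \<Rightarrow> int) \<Rightarrow> (nat \<Rightarrow> int)"
  assumes finG: "finite (carrier G)"
  and psi_iso: "\<psi> \<in> iso G G"
  and fpf: "\<And>g. g \<in> carrier G \<Longrightarrow> (\<psi> ^^ m) g = g \<Longrightarrow> g = \<one>"
  and m_pos: "m > 0"
  and M_Zk: "\<And>v. M v \<in> Zk k"
  and M_add: "\<And>u v. M (\<lambda>i. u i + v i) = (\<lambda>i. M u i + M v i)"
  and M_smul: "\<And>c v. M (\<lambda>i. c * v i) = (\<lambda>i. c * M v i)"
  and M_pow: "\<And>v. v \<in> Zk k \<Longrightarrow> (M ^^ m) v = v"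
  and M_sum: "\<And>v. v \<in> Zk k \<Longrightarrow> (\<lambda>i. \<Sum>j<m. (M ^^ j) v i) = (\<lambda>i. 0)"
begin

abbreviation "W \<equiv> wreath_Zk G k"

definition Mi where "Mi = M ^^ (m - 1)"

definition phi where
  "phi = (\<lambda>(f, x). (\<lambda>z. if z \<in> Zk k then \<psi> (f (Mi z)) else \<one>, M x))"

lemma psi_hom: "\<psi> \<in> hom G G" using psi_iso by (simp add: iso_def)
lemma psi_closed[simp]: "a \<in> carrier G \<Longrightarrow> \<psi> a \<in> carrier G"
  using psi_hom by (auto simp: hom_def)
lemma psi_mult: "a \<in> carrier G \<Longrightarrow> b \<in> carrier G \<Longrightarrow> \<psi> (a \<otimes> b) = \<psi> a \<otimes> \<psi> b"
  using psi_hom by (auto simp: hom_def)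
lemma gh_psi: "group_hom G G \<psi>"
  using psi_hom by (simp add: group_hom_def group_hom_axioms_def is_group)
lemma psi_one[simp]: "\<psi> \<one> = \<one>" using group_hom.hom_one[OF gh_psi] .
lemma psi_inv: "a \<in> carrier G \<Longrightarrow> \<psi> (inv a) = inv (\<psi> a)"
  using group_hom.hom_inv[OF gh_psi] by simp
lemma psi_inj: "inj_on \<psi> (carrier G)" using psi_iso by (simp add: iso_def bij_betw_def)
lemma psi_eq_one: "a \<in> carrier G \<Longrightarrow> \<psi> a = \<one> \<Longrightarrow> a = \<one>"
  using psi_inj by (metis inj_onD one_closed psi_one)

lemma psipow_hom: "(\<psi> ^^ j) \<in> hom G G"
proof (induction j)
  case 0 then show ?case by (simp add: hom_def)
next
  case (Suc j)
  have "\<psi> \<circ> (\<psi> ^^ j) \<in> hom G G"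
    using Suc psi_hom by (auto simp: hom_def Pi_iff)
  then show ?case by (simp add: comp_def)
qed

lemma psipow_closed[simp]: "a \<in> carrier G \<Longrightarrow> (\<psi> ^^ j) a \<in> carrier G"
  using psipow_hom by (auto simp: hom_def)

lemma psipow_one[simp]: "(\<psi> ^^ j) \<one> = \<one>"
  by (induction j) auto

lemma psipow_mult: "a \<in> carrier G \<Longrightarrow> b \<in> carrier G \<Longrightarrow> (\<psi> ^^ j) (a \<otimes> b) = (\<psi> ^^ j) a \<otimes> (\<psi> ^^ j) b"
  using psipow_hom by (auto simp: hom_def)

lemma psipow_inv: "a \<in> carrier G \<Longrightarrow> (\<psi> ^^ j) (inv a) = inv ((\<psi> ^^ j) a)"
  using group_hom.hom_inv[of G G "\<psi> ^^ j"] psipow_hom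
  by (simp add: group_hom_def group_hom_axioms_def is_group)

lemma M_zero: "M (\<lambda>i. 0) = (\<lambda>i. 0)"
  using M_smul[of 0 "\<lambda>i. 0"] by simp

lemma M_neg: "M (\<lambda>i. - v i) = (\<lambda>i. - M v i)"
  using M_smul[of "-1" v] by simp

lemma M_diff: "M (\<lambda>i. u i - v i) = (\<lambda>i. M u i - M v i)"
proof -
  have "M (\<lambda>i. u i - v i) = M (\<lambda>i. u i + (\<lambda>i. - v i) i)" by simp
  also have "\<dots> = (\<lambda>i. M u i + M (\<lambda>i. - v i) i)" by (rule M_add)
  finally show ?thesis by (simp add: M_neg)
qed

lemma Mpow_add: "(M ^^ j) (\<lambda>i. u i + v i) = (\<lambda>i. (M ^^ j) u i + (M ^^ j) v i)"
  by (induction j) (auto simp: M_add)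

lemma Mpow_smul: "(M ^^ j) (\<lambda>i. c * v i) = (\<lambda>i. c * (M ^^ j) v i)"
  by (induction j) (auto simp: M_smul)

lemma Mpow_diff: "(M ^^ j) (\<lambda>i. u i - v i) = (\<lambda>i. (M ^^ j) u i - (M ^^ j) v i)"
  by (induction j) (auto simp: M_diff)

lemma Mpow_Zk: "v \<in> Zk k \<Longrightarrow> (M ^^ j) v \<in> Zk k"
  by (cases j) (auto simp: M_Zk)

lemma M_sum_gen: "M (\<lambda>i. \<Sum>t\<in>T. w t i) = (\<lambda>i. \<Sum>t\<in>T. M (w t) i)" if "finite T"
  using that
proof (induction T rule: finite_induct)
  case empty then show ?case by (simp add: M_zero)
next
  case (insert t T)
  have "M (\<lambda>i. \<Sum>t\<in>insert t T. w t i) = M (\<lambda>i. w t i + (\<lambda>i. \<Sum>t\<in>T. w t i) i)"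
    using insert by simp
  also have "\<dots> = (\<lambda>i. M (w t) i + M (\<lambda>i. \<Sum>t\<in>T. w t i) i)" by (rule M_add) 
  finally show ?case using insert by simp
qed

lemma M_Mi: "v \<in> Zk k \<Longrightarrow> M (Mi v) = v"
proof -
  assume v: "v \<in> Zk k"
  have "M (Mi v) = (M ^^ Suc (m - 1)) v" by (simp add: Mi_def)
  also have "Suc (m - 1) = m" using m_pos by simp
  finally show ?thesis using M_pow v by simp
qed

lemma Mi_M: "v \<in> Zk k \<Longrightarrow> Mi (M v) = v"
proof -
  assume v: "v \<in> Zk k"
  have "Mi (M v) = (M ^^ Suc (m - 1)) v" by (simp add: Mi_def funpow_swap1)
  also have "Suc (m - 1) = m" using m_pos by simp
  finally show ?thesis using M_pow v by simp
qed

lemma Mi_Zk: "v \<in> Zk k \<Longrightarrow> Mi v \<in> Zk k"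
  by (simp add: Mi_def Mpow_Zk)

lemma Mi_diff: "Mi (\<lambda>i. u i - v i) = (\<lambda>i. Mi u i - Mi v i)"
  by (simp add: Mi_def Mpow_diff)

lemma inj_M: "inj_on M (Zk k)"
  by (metis Mi_M inj_onI)
lemma inj_Mi: "inj_on Mi (Zk k)"
  by (metis M_Mi inj_onI)


lemma finite_preimage_Zk:
  assumes "finite S" "inj_on h (Zk k)"
  shows "finite {z. z \<in> Zk k \<and> h z \<in> S}"
proof -
  have "{z. z \<in> Zk k \<and> h z \<in> S} = h -` S \<inter> Zk k" by auto
  then show ?thesis using finite_vimage_IntI[OF assms] by simp
qed

lemma phi_closed:
  assumes "a \<in> carrier W" shows "phi a \<in> carrier W"
proof -
  obtain f x where a: "a = (f, x)" by fastforce
  have f: "\<And>z. f z \<in> carrier G" "\<And>z. z \<notin> Zk k \<Longrightarrow> f z = \<one>" "finite {z. f z \<noteq> \<one>}" "x \<in> Zk k"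
    using assms a by (auto simp: carrier_W)
  have "{z. (if z \<in> Zk k then \<psi> (f (Mi z)) else \<one>) \<noteq> \<one>} \<subseteq> {z. z \<in> Zk k \<and> Mi z \<in> {z. f z \<noteq> \<one>}}"
    by auto
  moreover have "finite {z. z \<in> Zk k \<and> Mi z \<in> {z. f z \<noteq> \<one>}}"
    by (rule finite_preimage_Zk[OF f(3) inj_Mi])
  ultimately have "finite {z. (if z \<in> Zk k then \<psi> (f (Mi z)) else \<one>) \<noteq> \<one>}"
    by (rule finite_subset)
  then show ?thesis using f by (simp add: a phi_def carrier_W M_Zk)
qed

lemma phi_hom: "phi \<in> hom W W"
proof (rule homI)
  fix a assume "a \<in> carrier W" then show "phi a \<in> carrier W" by (rule phi_closed)
next
  fix a b assume A: "a \<in> carrier W" "b \<in> carrier W"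
  obtain f x where a: "a = (f, x)" by fastforce
  obtain g y where b: "b = (g, y)" by fastforce
  have f: "\<And>z. f z \<in> carrier G" "\<And>z. z \<notin> Zk k \<Longrightarrow> f z = \<one>" "x \<in> Zk k"
    using A a by (auto simp: carrier_W)
  have g: "\<And>z. g z \<in> carrier G" "\<And>z. z \<notin> Zk k \<Longrightarrow> g z = \<one>" "y \<in> Zk k"
    using A b by (auto simp: carrier_W)
  have e: "\<And>z. Mi (\<lambda>i. z i - M x i) = (\<lambda>i. Mi z i - x i)"
    using f(3) by (simp add: Mi_diff Mi_M)
  show "phi (a \<otimes>\<^bsub>W\<^esub> b) = phi a \<otimes>\<^bsub>W\<^esub> phi b"
    unfolding a b mult_W phi_def prod.case mult_W
    using f g Zk_diff_notin[of _ k "M x"] M_Zk[of x] Zk_diff[OF _ M_Zk[of x]]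
    by (auto simp: fun_eq_iff e M_add psi_mult)
qed

definition phiinv where
  "phiinv = (\<lambda>(g, y). (\<lambda>z. if z \<in> Zk k then inv_into (carrier G) \<psi> (g (M z)) else \<one>, Mi y))"

lemma psi_bij: "bij_betw \<psi> (carrier G) (carrier G)"
  using psi_iso by (simp add: iso_def)

lemma psiinv_closed: "a \<in> carrier G \<Longrightarrow> inv_into (carrier G) \<psi> a \<in> carrier G"
  by (metis bij_betw_def inv_into_into psi_bij)
lemma psi_psiinv: "a \<in> carrier G \<Longrightarrow> \<psi> (inv_into (carrier G) \<psi> a) = a"
  by (meson bij_betw_inv_into_right psi_bij)
lemma psiinv_one: "inv_into (carrier G) \<psi> \<one> = \<one>"
  by (metis inv_into_f_f one_closed psi_inj psi_one)

lemma phiinv_closed: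
  assumes "b \<in> carrier W" shows "phiinv b \<in> carrier W"
proof -
  obtain g y where b: "b = (g, y)" by fastforce
  have g: "\<And>z. g z \<in> carrier G" "\<And>z. z \<notin> Zk k \<Longrightarrow> g z = \<one>" "finite {z. g z \<noteq> \<one>}" "y \<in> Zk k"
    using assms b by (auto simp: carrier_W)
  have "{z. (if z \<in> Zk k then inv_into (carrier G) \<psi> (g (M z)) else \<one>) \<noteq> \<one>} \<subseteq> {z. z \<in> Zk k \<and> M z \<in> {z. g z \<noteq> \<one>}}"
    using psiinv_one by auto
  moreover have "finite {z. z \<in> Zk k \<and> M z \<in> {z. g z \<noteq> \<one>}}"
    by (rule finite_preimage_Zk[OF g(3) inj_M])
  ultimately have "finite {z. (if z \<in> Zk k then inv_into (carrier G) \<psi> (g (M z)) else \<one>) \<noteq> \<one>}"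
    by (rule finite_subset)
  then show ?thesis using g by (simp add: b phiinv_def carrier_W Mi_Zk psiinv_closed)
qed

lemma phi_phiinv: "b \<in> carrier W \<Longrightarrow> phi (phiinv b) = b"
proof -
  assume B: "b \<in> carrier W"
  obtain g y where b: "b = (g, y)" by fastforce
  have g: "\<And>z. g z \<in> carrier G" "\<And>z. z \<notin> Zk k \<Longrightarrow> g z = \<one>" "y \<in> Zk k"
    using B b by (auto simp: carrier_W)
  show ?thesis unfolding b phi_def phiinv_def
    using g by (auto simp: fun_eq_iff Mi_Zk M_Mi psi_psiinv)
qed

lemma phi_inj: "inj_on phi (carrier W)"
proof (rule inj_onI)
  fix a b assume A: "a \<in> carrier W" "b \<in> carrier W" and e: "phi a = phi b"
  obtain f x where a: "a = (f, x)" by fastforce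
  obtain g y where b: "b = (g, y)" by fastforce
  have f: "\<And>z. f z \<in> carrier G" "\<And>z. z \<notin> Zk k \<Longrightarrow> f z = \<one>" "x \<in> Zk k"
    using A a by (auto simp: carrier_W)
  have g: "\<And>z. g z \<in> carrier G" "\<And>z. z \<notin> Zk k \<Longrightarrow> g z = \<one>" "y \<in> Zk k"
    using A b by (auto simp: carrier_W)
  have e1: "M x = M y" and e2: "\<And>z. z \<in> Zk k \<Longrightarrow> \<psi> (f (Mi z)) = \<psi> (g (Mi z))"
    using e unfolding a b phi_def by (auto simp: fun_eq_iff split: if_splits)
  have "x = y" using e1 f(3) g(3) inj_M by (auto dest: inj_onD)
  moreover have "f z = g z" for z
  proof (cases "z \<in> Zk k")
    case True
    then have "\<psi> (f z) = \<psi> (g z)" using e2[of "M z"] by (simp add: Mi_M M_Zk)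
    then show ?thesis using psi_inj f g by (auto dest: inj_onD)
  next
    case False then show ?thesis using f g by simp
  qed
  ultimately show "a = b" unfolding a b by auto
qed

lemma phi_iso: "phi \<in> iso W W"
proof (rule isoI)
  show "phi \<in> hom W W" by (rule phi_hom)
  show "bij_betw phi (carrier W) (carrier W)"
    unfolding bij_betw_def
  proof
    show "inj_on phi (carrier W)" by (rule phi_inj)
    show "phi ` carrier W = carrier W"
    proof
      show "phi ` carrier W \<subseteq> carrier W" using phi_closed by auto
      show "carrier W \<subseteq> phi ` carrier W"
        using phiinv_closed phi_phiinv by (metis image_eqI subsetI)
    qed
  qed
qed


lemma W_group: "group W" by (rule wreath_group)

lemma inv_W: assumes "(g, y) \<in> carrier W"
  shows "inv\<^bsub>W\<^esub> (g, y) = (\<lambda>z. inv (g (\<lambda>i. z i + y i)), \<lambda>i. - y i)"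
proof -
  interpret Wg: group W by (rule W_group)
  have g: "\<And>z. g z \<in> carrier G" "\<And>z. z \<notin> Zk k \<Longrightarrow> g z = \<one>" "finite {z. g z \<noteq> \<one>}" "y \<in> Zk k"
    using assms by (auto simp: carrier_W)
  have fin: "finite {z. inv g (\<lambda>i. z i + y i) \<noteq> \<one>}"
  proof -
    have "{z. inv g (\<lambda>i. z i + y i) \<noteq> \<one>} \<subseteq> {z. g (\<lambda>i. z i - (- y i)) \<noteq> \<one>}"
      using g by auto
    then show ?thesis using finite_shift[of g \<one> "\<lambda>i. - y i"] g
      by (auto intro: finite_subset)
  qed
  have c: "(\<lambda>z. inv (g (\<lambda>i. z i + y i)), \<lambda>i. - y i) \<in> carrier W"
    using g fin by (auto simp: carrier_W Zk_uminus Zk_add_notin)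
  have "(\<lambda>z. inv (g (\<lambda>i. z i + y i)), \<lambda>i. - y i) \<otimes>\<^bsub>W\<^esub> (g, y) = \<one>\<^bsub>W\<^esub>"
  proof -
    have "\<And>z. (\<lambda>i. z i - - y i) = (\<lambda>i. z i + y i)" by auto
    then show ?thesis using g by (auto simp: mult_W one_W fun_eq_iff)
  qed
  then show ?thesis using Wg.inv_equality c assms by blast
qed

lemma inv_cancel_left: "x \<in> carrier G \<Longrightarrow> y \<in> carrier G \<Longrightarrow> inv x \<otimes> (x \<otimes> y) = y"
  by (simp add: m_assoc[symmetric])

lemma eq_cancel_lemma:
  assumes "a \<in> carrier G" "b \<in> carrier G" "c \<in> carrier G" "d \<in> carrier G"
  shows "a \<otimes> inv c = b \<otimes> inv d \<longleftrightarrow> a \<otimes> inv b = c \<otimes> inv d"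
proof
  assume e: "a \<otimes> inv c = b \<otimes> inv d"
  have "a \<otimes> inv b = (a \<otimes> inv c) \<otimes> (c \<otimes> inv b)" using assms by (simp add: m_assoc inv_cancel_left)
  also have "\<dots> = (b \<otimes> inv d) \<otimes> (c \<otimes> inv b)" using e by simp
  also have "\<dots> = (c \<otimes> inv b) \<otimes> (b \<otimes> inv d)" using assms by (intro m_comm) simp_all
  also have "\<dots> = c \<otimes> inv d" using assms by (simp add: m_assoc inv_cancel_left)
  finally show "a \<otimes> inv b = c \<otimes> inv d" .
next
  assume e: "a \<otimes> inv b = c \<otimes> inv d"
  have "a \<otimes> inv c = (a \<otimes> inv b) \<otimes> (b \<otimes> inv c)" using assms by (simp add: m_assoc inv_cancel_left)
  also have "\<dots> = (c \<otimes> inv d) \<otimes> (b \<otimes> inv c)" using e by simp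
  also have "\<dots> = (b \<otimes> inv c) \<otimes> (c \<otimes> inv d)" using assms by (intro m_comm) simp_all
  also have "\<dots> = b \<otimes> inv d" using assms by (simp add: m_assoc inv_cancel_left)
  finally show "a \<otimes> inv c = b \<otimes> inv d" .
qed

definition D where "D a = a \<otimes> inv ((\<psi> ^^ m) a)"

lemma D_closed: "a \<in> carrier G \<Longrightarrow> D a \<in> carrier G" by (simp add: D_def)

lemma D_inj: "inj_on D (carrier G)"
proof (rule inj_onI)
  fix a b assume ab: "a \<in> carrier G" "b \<in> carrier G" "D a = D b"
  have "(\<psi> ^^ m) (a \<otimes> inv b) = a \<otimes> inv b"
  proof -
    have "a \<otimes> inv ((\<psi> ^^ m) a) = b \<otimes> inv ((\<psi> ^^ m) b)" using ab by (simp add: D_def)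
    then have "a \<otimes> inv b = (\<psi> ^^ m) a \<otimes> inv ((\<psi> ^^ m) b)"
      using ab eq_cancel_lemma[of a b "(\<psi> ^^ m) a" "(\<psi> ^^ m) b"] psipow_closed by blast
    moreover have "(\<psi> ^^ m) (a \<otimes> inv b) = (\<psi> ^^ m) a \<otimes> inv ((\<psi> ^^ m) b)"
      using ab by (simp add: psipow_mult psipow_inv)
    ultimately show ?thesis by (metis (no_types))
  qed
  then have e: "a \<otimes> inv b = \<one>" by (intro fpf) (use ab in auto)
  have "a = (a \<otimes> inv b) \<otimes> b" using ab by (simp add: m_assoc)
  then show "a = b" using ab by (simp add: e)
qed

lemma D_surj: "D ` carrier G = carrier G"
  using endo_inj_surj[OF finG _ D_inj] D_closed by auto

definition cc where "cc b = inv_into (carrier G) D b"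

lemma cc_closed: "b \<in> carrier G \<Longrightarrow> cc b \<in> carrier G"
  unfolding cc_def using D_surj by (metis inv_into_into)
lemma D_cc: "b \<in> carrier G \<Longrightarrow> D (cc b) = b"
  unfolding cc_def using D_surj by (metis f_inv_into_f)
lemma cc_one: "cc \<one> = \<one>"
proof -
  have "D \<one> = \<one>" by (simp add: D_def psipow_hom)
  then show ?thesis unfolding cc_def by (metis D_inj inv_into_f_f one_closed)
qed

lemma telescope:
  fixes v :: "nat \<Rightarrow> int"
  shows "(\<Sum>j<n. int (j+1) * v j) - (\<Sum>j<n. int (j+1) * v (Suc j)) = (\<Sum>j<n. v j) - int n * v n"
  by (induction n) (auto simp: algebra_simps)


end


lemma (in comm_group) inv_cancel_left2: "x \<in> carrier G \<Longrightarrow> y \<in> carrier G \<Longrightarrow> x \<otimes> (inv x \<otimes> y) = y"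
  by (simp add: m_assoc[symmetric])

context wsetup
begin

lemma Apow_formula:
  "((\<lambda>w i. M w i + x i) ^^ j) w = (\<lambda>i. (M ^^ j) w i + (\<Sum>t<j. (M ^^ t) x i))"
proof (induction j)
  case 0 then show ?case by simp
next
  case (Suc j)
  have "((\<lambda>w i. M w i + x i) ^^ Suc j) w = (\<lambda>i. M (\<lambda>i. (M ^^ j) w i + (\<Sum>t<j. (M ^^ t) x i)) i + x i)"
    using Suc by simp
  also have "\<dots> = (\<lambda>i. (M ^^ Suc j) w i + ((\<Sum>t<j. (M ^^ Suc t) x i) + x i))"
    by (simp add: M_add M_sum_gen add.assoc)
  also have "\<dots> = (\<lambda>i. (M ^^ Suc j) w i + (\<Sum>t<Suc j. (M ^^ t) x i))"
  proof -
    have e: "\<And>i. (\<Sum>t<Suc j. (M ^^ t) x i) = (\<Sum>t<j. (M ^^ Suc t) x i) + x i"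
      unfolding sum.lessThan_Suc_shift by (simp only: funpow_0 add.commute)
    show ?thesis unfolding e ..

  qed
  finally show ?case .
qed

lemma step1:
  assumes a: "(f, x) \<in> carrier W"
  shows "((f, x), (\<lambda>z. \<one>, x)) \<in> reid_rel W phi"
proof -
  interpret Wg: group W by (rule W_group)
  have f: "\<And>z. f z \<in> carrier G" "\<And>z. z \<notin> Zk k \<Longrightarrow> f z = \<one>" "finite {z. f z \<noteq> \<one>}" "x \<in> Zk k"
    using a by (auto simp: carrier_W)
  define c where "c z = cc (inv (f z))" for z
  have c_closed: "c z \<in> carrier G" for z using f by (simp add: c_def cc_closed)
  have Dc: "D (c z) = inv (f z)" for z using f by (simp add: c_def D_cc)
  have c_supp: "{z. c z \<noteq> \<one>} \<subseteq> {z. f z \<noteq> \<one>}" by (auto simp: c_def cc_one)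
  define B where "B z = Mi (\<lambda>i. z i - x i)" for z
  define A where "A w = (\<lambda>i. M w i + x i)" for w
  have B_Zk: "z \<in> Zk k \<Longrightarrow> B z \<in> Zk k" for z by (simp add: B_def Mi_Zk Zk_diff f)
  have A_Zk: "A w \<in> Zk k" for w by (simp add: A_def Zk_add M_Zk f)
  have AB: "z \<in> Zk k \<Longrightarrow> A (B z) = z" for z
    by (simp add: A_def B_def M_Mi Zk_diff f)
  have BA: "w \<in> Zk k \<Longrightarrow> B (A w) = w" for w
    by (simp add: A_def B_def Mi_M)
  have Bpow_Zk: "z \<in> Zk k \<Longrightarrow> (B ^^ j) z \<in> Zk k" for z j
    by (induction j) (auto simp: B_Zk)
  have Apow_Zk: "w \<in> Zk k \<Longrightarrow> (A ^^ j) w \<in> Zk k" for w j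
    by (induction j) (auto simp: A_Zk)
  have Am: "w \<in> Zk k \<Longrightarrow> (A ^^ m) w = w" for w
  proof -
    assume w: "w \<in> Zk k"
    have "(A ^^ m) w = (\<lambda>i. (M ^^ m) w i + (\<Sum>t<m. (M ^^ t) x i))"
      unfolding A_def by (rule Apow_formula)
    also have "\<dots> = w" using M_pow[OF w] M_sum[OF f(4)] by (simp add: fun_eq_iff)
    finally show ?thesis .
  qed
  have BApow: "w \<in> Zk k \<Longrightarrow> (B ^^ j) ((A ^^ j) w) = w" for w j
  proof (induction j)
    case 0 then show ?case by simp
  next
    case (Suc j)
    have "(B ^^ Suc j) ((A ^^ Suc j) w) = (B ^^ j) (B (A ((A ^^ j) w)))"
      by (simp only: funpow_Suc_right[of j B] funpow.simps(2)[of j A] comp_def)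
    also have "\<dots> = (B ^^ j) ((A ^^ j) w)" using Suc by (simp add: BA Apow_Zk)
    finally show ?case using Suc by simp
  qed
  have ABpow: "z \<in> Zk k \<Longrightarrow> (A ^^ j) ((B ^^ j) z) = z" for z j
  proof (induction j)
    case 0 then show ?case by simp
  next
    case (Suc j)
    have "(A ^^ Suc j) ((B ^^ Suc j) z) = (A ^^ j) (A (B ((B ^^ j) z)))"
      by (simp only: funpow_Suc_right[of j A] funpow.simps(2)[of j B] comp_def)
    also have "\<dots> = (A ^^ j) ((B ^^ j) z)" using Suc by (simp add: AB Bpow_Zk)
    finally show ?case using Suc by simp
  qed
  have Bm: "z \<in> Zk k \<Longrightarrow> (B ^^ m) z = z" for z
    using BApow[of z m] Am[of z] by simp
  have inj_Bpow: "inj_on (B ^^ j) (Zk k)" for j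
    by (rule inj_on_inverseI[where g = "A ^^ j"]) (simp add: ABpow)
  define a where "a j w = (\<psi> ^^ j) (c ((B ^^ j) w))" for j w
  have a_closed: "a j w \<in> carrier G" for j w by (simp add: a_def c_closed)
  define gf where "gf w = (if w \<in> Zk k then prodG G (\<lambda>j. a j w) m else \<one>)" for w
  have gf_closed: "gf w \<in> carrier G" for w by (simp add: gf_def prodG_closed a_closed)
  have gf_supp: "{w. gf w \<noteq> \<one>} \<subseteq> (\<Union>j<m. {w. w \<in> Zk k \<and> (B ^^ j) w \<in> {z. f z \<noteq> \<one>}})"
  proof
    fix w assume "w \<in> {w. gf w \<noteq> \<one>}"
    then have w: "w \<in> Zk k" "prodG G (\<lambda>j. a j w) m \<noteq> \<one>" unfolding gf_def
      by (simp_all split: if_splits)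
    obtain j where j: "j < m" "a j w \<noteq> \<one>"
    proof -
      have "\<not> (\<forall>j<m. a j w = \<one>)" using w(2) prodG_one[of m "\<lambda>j. a j w"] by blast
      then show ?thesis using that by blast
    qed
    have "c ((B ^^ j) w) \<noteq> \<one>"
    proof
      assume "c ((B ^^ j) w) = \<one>"
      then have "a j w = \<one>" by (simp add: a_def)
      then show False using j by simp
    qed
    then have "(B ^^ j) w \<in> {z. f z \<noteq> \<one>}" using c_supp by blast
    then show "w \<in> (\<Union>j<m. {w. w \<in> Zk k \<and> (B ^^ j) w \<in> {z. f z \<noteq> \<one>}})"
      using j w(1) by blast
  qed
  have fj: "finite {w. w \<in> Zk k \<and> (B ^^ j) w \<in> {z. f z \<noteq> \<one>}}" for j
    by (rule finite_preimage_Zk[OF f(3) inj_Bpow])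
  have gf_fin: "finite {w. gf w \<noteq> \<one>}"
    by (rule finite_subset[OF gf_supp finite_UN_I[OF finite_lessThan fj]])
  have key: "gf z \<otimes> inv (\<psi> (gf (B z))) = inv (f z)" if z: "z \<in> Zk k" for z
  proof -
    obtain m' where m': "m = Suc m'" using m_pos by (cases m) auto
    have "\<psi> (gf (B z)) = prodG G (\<lambda>j. \<psi> (a j (B z))) m"
      using z B_Zk by (simp add: gf_def prodG_hom[OF psi_hom] a_closed)
    also have "(\<lambda>j. \<psi> (a j (B z))) = (\<lambda>j. a (Suc j) z)"
      by (rule ext) (simp only: a_def funpow_Suc_right[of _ B] funpow.simps(2)[of _ \<psi>] comp_apply)
    finally have e1: "\<psi> (gf (B z)) = prodG G (\<lambda>j. a (Suc j) z) m' \<otimes> a m z"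
      by (simp add: m')
    have e2: "gf z = a 0 z \<otimes> prodG G (\<lambda>j. a (Suc j) z) m'"
      using z by (simp add: gf_def m' prodG_shift a_closed del: prodG.simps)
    have am: "a m z = (\<psi> ^^ m) (c z)" by (simp add: a_def Bm z)
    have a0: "a 0 z = c z" by (simp add: a_def)
    let ?P = "prodG G (\<lambda>j. a (Suc j) z) m'"
    have P: "?P \<in> carrier G" by (simp add: prodG_closed a_closed)
    have "gf z \<otimes> inv (\<psi> (gf (B z))) = (c z \<otimes> ?P) \<otimes> inv (?P \<otimes> (\<psi> ^^ m) (c z))"
      using e1 e2 am a0 by simp
    also have "\<dots> = c z \<otimes> inv ((\<psi> ^^ m) (c z))"
      using P c_closed
      by (simp add: inv_mult_group m_assoc inv_cancel_left inv_cancel_left2 m_comm[of "inv ((\<psi> ^^ m) (c z))"])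
    also have "\<dots> = inv (f z)" using Dc by (simp add: D_def)
    finally show ?thesis .
  qed
  let ?g = "(gf, \<lambda>i. 0::int)"
  have g_car: "?g \<in> carrier W"
    using gf_closed gf_fin by (auto simp: carrier_W Zk_zero gf_def)
  have ginv: "inv\<^bsub>W\<^esub> ?g = (\<lambda>z. inv (gf z), \<lambda>i. 0)"
    using inv_W[OF g_car] by simp
  have phig: "phi (inv\<^bsub>W\<^esub> ?g) = (\<lambda>z. if z \<in> Zk k then \<psi> (inv (gf (Mi z))) else \<one>, \<lambda>i. 0)"
    unfolding ginv phi_def by (simp add: M_zero)
  have res: "?g \<otimes>\<^bsub>W\<^esub> (f, x) \<otimes>\<^bsub>W\<^esub> phi (inv\<^bsub>W\<^esub> ?g) = (\<lambda>z. \<one>, x)"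
  proof -
    have "?g \<otimes>\<^bsub>W\<^esub> (f, x) \<otimes>\<^bsub>W\<^esub> phi (inv\<^bsub>W\<^esub> ?g) =
      (\<lambda>z. (gf z \<otimes> f z) \<otimes> (if (\<lambda>i. z i - x i) \<in> Zk k then \<psi> (inv (gf (Mi (\<lambda>i. z i - x i)))) else \<one>), x)"
      unfolding phig by (simp add: mult_W)
    also have "\<dots> = (\<lambda>z. \<one>, x)"
    proof -
      have "(gf z \<otimes> f z) \<otimes> (if (\<lambda>i. z i - x i) \<in> Zk k then \<psi> (inv (gf (Mi (\<lambda>i. z i - x i)))) else \<one>) = \<one>" for z
      proof (cases "z \<in> Zk k")
        case True
        then have "(\<lambda>i. z i - x i) \<in> Zk k" using f(4) by (simp add: Zk_diff)
        then have "(gf z \<otimes> f z) \<otimes> (if (\<lambda>i. z i - x i) \<in> Zk k then \<psi> (inv (gf (Mi (\<lambda>i. z i - x i)))) else \<one>)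
            = f z \<otimes> (gf z \<otimes> inv (\<psi> (gf (Mi (\<lambda>i. z i - x i)))))"
          using gf_closed f(1) by (simp add: psi_inv m_ac)
        also have "\<dots> = \<one>" using key[OF True] f(1) by (simp add: B_def)
        finally show ?thesis .
      next
        case False
        then have "(\<lambda>i. z i - x i) \<notin> Zk k" using f(4) by (simp add: Zk_diff_notin)
        then show ?thesis using False f(2) by (simp add: gf_def)
      qed
      then show ?thesis by simp
    qed
    finally show ?thesis .
  qed
  have "(\<lambda>z. \<one>, x) \<in> carrier W" using f(4) by (simp add: carrier_W)
  then show ?thesis using a g_car res unfolding reid_rel_def by (auto intro!: bexI[of _ ?g])
qed


lemma step2:
  assumes x: "x \<in> Zk k" and y: "y \<in> Zk k"
  shows "((\<lambda>z. \<one>, x), (\<lambda>z. \<one>, \<lambda>i. y i + x i - M y i)) \<in> reid_rel W phi"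
proof -
  have gc: "(\<lambda>z. \<one>, y) \<in> carrier W" using y by (simp add: carrier_W)
  have ginv: "inv\<^bsub>W\<^esub> (\<lambda>z. \<one>, y) = (\<lambda>z. \<one>, \<lambda>i. - y i)"
    using inv_W[OF gc] by simp
  have phig: "phi (inv\<^bsub>W\<^esub> (\<lambda>z. \<one>, y)) = (\<lambda>z. \<one>, \<lambda>i. - M y i)"
    unfolding ginv phi_def by (auto simp: M_neg fun_eq_iff)
  have res: "(\<lambda>z. \<one>, y) \<otimes>\<^bsub>W\<^esub> (\<lambda>z. \<one>, x) \<otimes>\<^bsub>W\<^esub> phi (inv\<^bsub>W\<^esub> (\<lambda>z. \<one>, y))
      = (\<lambda>z. \<one>, \<lambda>i. y i + x i - M y i)"
    unfolding phig by (simp add: mult_W)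
  have c1: "(\<lambda>z. \<one>, x) \<in> carrier W" using x by (simp add: carrier_W)
  have c2: "(\<lambda>z. \<one>, \<lambda>i. y i + x i - M y i) \<in> carrier W"
    using x y M_Zk[of y] by (simp add: carrier_W Zk_diff Zk_add)
  show ?thesis using c1 c2 gc res unfolding reid_rel_def by (auto intro!: bexI[of _ "(\<lambda>z. \<one>, y)"])
qed

definition X0 where "X0 = {v. \<forall>i. (i < k \<longrightarrow> 0 \<le> v i \<and> v i < int m) \<and> (k \<le> i \<longrightarrow> v i = 0)}"

lemma finite_X0: "finite X0"
proof -
  have "X0 \<subseteq> (\<lambda>g i. if i < k then g i else 0) ` ({..<k} \<rightarrow>\<^sub>E {0..<int m})"
  proof
    fix v assume v: "v \<in> X0"
    have "v = (\<lambda>i. if i < k then restrict v {..<k} i else 0)"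
      using v by (auto simp: X0_def fun_eq_iff)
    moreover have "restrict v {..<k} \<in> {..<k} \<rightarrow>\<^sub>E {0..<int m}" using v by (auto simp: X0_def)
    ultimately show "v \<in> (\<lambda>g i. if i < k then g i else 0) ` ({..<k} \<rightarrow>\<^sub>E {0..<int m})" by blast
  qed
  moreover have "finite ({..<k} \<rightarrow>\<^sub>E {0..<int m})" by (intro finite_PiE) auto
  ultimately show ?thesis by (meson finite_imageI finite_subset)
qed

lemma reduce_x:
  assumes x: "x \<in> Zk k"
  shows "\<exists>y\<in>Zk k. (\<lambda>i. y i + x i - M y i) \<in> X0"
proof -
  define q where "q i = x i div int m" for i
  define x0 where "x0 i = x i mod int m" for i
  have q: "q \<in> Zk k" using x by (auto simp: Zk_def q_def)
  have x0: "x0 \<in> X0" using x m_pos by (auto simp: X0_def x0_def Zk_def)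
  have xe: "x i = int m * q i + x0 i" for i by (simp add: q_def x0_def)
  define y where "y = (\<lambda>i. \<Sum>j<m. int (j+1) * (M ^^ j) q i)"
  have yZ: "y \<in> Zk k" using Mpow_Zk[OF q] by (auto simp: Zk_def y_def)
  have My: "M y = (\<lambda>i. \<Sum>j<m. int (j+1) * (M ^^ Suc j) q i)"
    unfolding y_def by (simp add: M_sum_gen M_smul)
  have "y i + x i - M y i = x0 i" for i
  proof -
    have "y i - M y i = (\<Sum>j<m. (M ^^ j) q i) - int m * (M ^^ m) q i"
      proof -
      have yi: "y i = (\<Sum>j<m. int (j+1) * (M ^^ j) q i)" by (simp add: y_def)
      have Myi: "M y i = (\<Sum>j<m. int (j+1) * (M ^^ Suc j) q i)" by (simp add: My)
      show ?thesis unfolding yi Myi using telescope[where n=m and v="\<lambda>j. (M ^^ j) q i"] by simp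
    qed
    also have "\<dots> = - (int m * q i)"
      using fun_cong[OF M_sum[OF q], of i] M_pow[OF q] by simp
    finally show ?thesis using xe[of i] by simp
  qed
  then have "(\<lambda>i. y i + x i - M y i) = x0" by auto
  then show ?thesis using yZ x0 by auto
qed

theorem finite_reid: "finite_reidemeister W phi"
proof -
  let ?R = "reid_rel W phi"
  have eq: "equiv (carrier W) ?R" by (rule reid_equiv[OF W_group phi_hom])
  have "carrier W // ?R \<subseteq> (\<lambda>s. ?R `` {s}) ` ((\<lambda>x0. (\<lambda>z. \<one>, x0)) ` X0)"
  proof
    fix C assume "C \<in> carrier W // ?R"
    then obtain a where a: "a \<in> carrier W" and C: "C = ?R `` {a}" by (auto simp: quotient_def)
    obtain f x where ax: "a = (f, x)" by fastforce
    have x: "x \<in> Zk k" using a ax by (simp add: carrier_W)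
    obtain y where y: "y \<in> Zk k" and yx: "(\<lambda>i. y i + x i - M y i) \<in> X0" using reduce_x[OF x] by blast
    have r1: "(a, (\<lambda>z. \<one>, x)) \<in> ?R" using step1 a ax by simp
    have r2: "((\<lambda>z. \<one>, x), (\<lambda>z. \<one>, \<lambda>i. y i + x i - M y i)) \<in> ?R" by (rule step2[OF x y])
    have "(a, (\<lambda>z. \<one>, \<lambda>i. y i + x i - M y i)) \<in> ?R"
      using r1 r2 eq by (meson equivE transD)
    then have "C = ?R `` {(\<lambda>z. \<one>, \<lambda>i. y i + x i - M y i)}"
      using C eq by (simp add: equiv_class_eq)
    then show "C \<in> (\<lambda>s. ?R `` {s}) ` ((\<lambda>x0. (\<lambda>z. \<one>, x0)) ` X0)" using yx by blast
  qed
  moreover have "finite ((\<lambda>s. ?R `` {s}) ` ((\<lambda>x0. (\<lambda>z. \<one>, x0)) ` X0))"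
    using finite_X0 by simp
  ultimately show ?thesis unfolding finite_reidemeister_def by (rule finite_subset)
qed

theorem main_abstract: "\<exists>\<phi>. \<phi> \<in> iso W W \<and> finite_reidemeister W \<phi>"
  using phi_iso finite_reid by blast

end


type_synonym imat = "int list list"

definition lmul :: "nat \<Rightarrow> imat \<Rightarrow> imat \<Rightarrow> imat" where
  "lmul b L L' = map (\<lambda>i. map (\<lambda>t. \<Sum>s<b. L!i!s * L'!s!t) [0..<b]) [0..<b]"
definition lone :: "nat \<Rightarrow> imat" where
  "lone b = map (\<lambda>i. map (\<lambda>t. if i = t then 1 else 0) [0..<b]) [0..<b]"
definition lscal :: "nat \<Rightarrow> int \<Rightarrow> imat" where
  "lscal b c = map (\<lambda>i. map (\<lambda>t. if i = t then c else 0) [0..<b]) [0..<b]"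
definition lzero :: "nat \<Rightarrow> imat" where
  "lzero b = map (\<lambda>i. map (\<lambda>t. 0) [0..<b]) [0..<b]"
definition lsub :: "nat \<Rightarrow> imat \<Rightarrow> imat \<Rightarrow> imat" where
  "lsub b L L' = map (\<lambda>i. map (\<lambda>t. L!i!t - L'!i!t) [0..<b]) [0..<b]"
definition ladd :: "nat \<Rightarrow> imat \<Rightarrow> imat \<Rightarrow> imat" where
  "ladd b L L' = map (\<lambda>i. map (\<lambda>t. L!i!t + L'!i!t) [0..<b]) [0..<b]"
primrec lpow :: "nat \<Rightarrow> imat \<Rightarrow> nat \<Rightarrow> imat" where
  "lpow b L 0 = lone b"
| "lpow b L (Suc n) = lmul b L (lpow b L n)"
primrec lsum :: "nat \<Rightarrow> imat \<Rightarrow> nat \<Rightarrow> imat" where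
  "lsum b L 0 = lzero b"
| "lsum b L (Suc n) = ladd b (lsum b L n) (lpow b L n)"

lemma lmul_nth: "i < b \<Longrightarrow> t < b \<Longrightarrow> lmul b L L' ! i ! t = (\<Sum>s<b. L!i!s * L'!s!t)"
  by (simp add: lmul_def)
lemma lone_nth: "i < b \<Longrightarrow> t < b \<Longrightarrow> lone b ! i ! t = (if i = t then 1 else 0)"
  by (simp add: lone_def)
lemma lscal_nth: "i < b \<Longrightarrow> t < b \<Longrightarrow> lscal b c ! i ! t = (if i = t then c else 0)"
  by (simp add: lscal_def)
lemma lzero_nth: "i < b \<Longrightarrow> t < b \<Longrightarrow> lzero b ! i ! t = 0"
  by (simp add: lzero_def)
lemma lsub_nth: "i < b \<Longrightarrow> t < b \<Longrightarrow> lsub b L L' ! i ! t = L!i!t - L'!i!t"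
  by (simp add: lsub_def)
lemma ladd_nth: "i < b \<Longrightarrow> t < b \<Longrightarrow> ladd b L L' ! i ! t = L!i!t + L'!i!t"
  by (simp add: ladd_def)

definition blk :: "nat \<Rightarrow> nat \<Rightarrow> imat \<Rightarrow> (nat \<Rightarrow> int) \<Rightarrow> nat \<Rightarrow> int" where
  "blk off b L u j = (if off \<le> j \<and> j < off + b then (\<Sum>s<b. L!(j-off)!s * u (off + s)) else 0)"

fun opl :: "nat \<Rightarrow> (nat \<times> imat) list \<Rightarrow> (nat \<Rightarrow> int) \<Rightarrow> nat \<Rightarrow> int" where
  "opl off [] u = (\<lambda>j. 0)"
| "opl off ((b, L) # xs) u = (\<lambda>j. blk off b L u j + opl (off + b) xs u j)"

definition tot :: "(nat \<times> imat) list \<Rightarrow> nat" where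
  "tot xs = sum_list (map fst xs)"

lemma tot_simps[simp]: "tot [] = 0" "tot ((b, L) # xs) = b + tot xs"
  by (simp_all add: tot_def)

lemma tot_map: "tot (map (\<lambda>x. (sz x, F x)) xs) = sum_list (map sz xs)"
  by (induction xs) auto

lemma blk_out: "\<not> (off \<le> j \<and> j < off + b) \<Longrightarrow> blk off b L u j = 0"
  unfolding blk_def by auto

lemma blk_cong: "(\<And>t. off \<le> t \<Longrightarrow> t < off + b \<Longrightarrow> u t = u' t) \<Longrightarrow> blk off b L u = blk off b L u'"
  by (auto simp: blk_def fun_eq_iff intro!: sum.cong)

lemma opl_out: "j < off \<or> off + tot xs \<le> j \<Longrightarrow> opl off xs u j = 0"
  by (induction off xs u rule: opl.induct) (auto simp: blk_out)

lemma opl_cong: "(\<And>t. off \<le> t \<Longrightarrow> t < off + tot xs \<Longrightarrow> u t = u' t) \<Longrightarrow> opl off xs u = opl off xs u'"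
proof (induction off xs u rule: opl.induct)
  case (1 off u) then show ?case by simp
next
  case (2 off b L xs u)
  have "blk off b L u = blk off b L u'" by (rule blk_cong) (use 2(2) in auto)
  moreover have "opl (off + b) xs u = opl (off + b) xs u'" by (rule 2(1)) (use 2(2) in auto)
  ultimately show ?case by simp
qed

lemma blk_comp: "blk off b L (blk off b L' u) = blk off b (lmul b L L') u"
proof (rule ext)
  fix j
  show "blk off b L (blk off b L' u) j = blk off b (lmul b L L') u j"
  proof (cases "off \<le> j \<and> j < off + b")
    case True
    have "blk off b L (blk off b L' u) j = (\<Sum>s<b. L!(j-off)!s * (\<Sum>t<b. L'!s!t * u (off + t)))"
      using True by (simp add: blk_def)
    also have "\<dots> = (\<Sum>s<b. \<Sum>t<b. L!(j-off)!s * (L'!s!t * u (off + t)))"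
      by (simp add: sum_distrib_left)
    also have "\<dots> = (\<Sum>t<b. \<Sum>s<b. L!(j-off)!s * (L'!s!t * u (off + t)))"
      by (rule sum.swap)
    also have "\<dots> = (\<Sum>t<b. (\<Sum>s<b. L!(j-off)!s * L'!s!t) * u (off + t))"
      by (simp add: sum_distrib_right mult.assoc)
    also have "\<dots> = blk off b (lmul b L L') u j"
      using True by (auto simp: blk_def lmul_nth intro!: sum.cong)
    finally show ?thesis .
  next
    case False then show ?thesis by (simp add: blk_out)
  qed
qed

lemma opl_comp:
  "opl off (map (\<lambda>x. (sz x, F x)) xs) (opl off (map (\<lambda>x. (sz x, G x)) xs) u)
   = opl off (map (\<lambda>x. (sz x, lmul (sz x) (F x) (G x))) xs) u"
proof (induction xs arbitrary: off)
  case Nil then show ?case by simp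
next
  case (Cons x xs)
  let ?v = "opl off (map (\<lambda>x. (sz x, G x)) (x # xs)) u"
  have v: "?v = (\<lambda>j. blk off (sz x) (G x) u j + opl (off + sz x) (map (\<lambda>x. (sz x, G x)) xs) u j)"
    by simp
  have "blk off (sz x) (F x) ?v = blk off (sz x) (F x) (blk off (sz x) (G x) u)"
    by (rule blk_cong) (simp add: v opl_out)
  moreover have "opl (off + sz x) (map (\<lambda>x. (sz x, F x)) xs) ?v
      = opl (off + sz x) (map (\<lambda>x. (sz x, F x)) xs) (opl (off + sz x) (map (\<lambda>x. (sz x, G x)) xs) u)"
    by (rule opl_cong) (simp add: v blk_out)
  ultimately show ?case using Cons by (simp add: blk_comp)
qed

lemma blk_add_vec: "blk off b L (\<lambda>i. u i + v i) j = blk off b L u j + blk off b L v j"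
  by (simp add: blk_def algebra_simps sum.distrib)
lemma blk_smul_vec: "blk off b L (\<lambda>i. c * u i) j = c * blk off b L u j"
  by (simp add: blk_def algebra_simps sum_distrib_left)
lemma blk_sub_vec: "blk off b L (\<lambda>i. u i - v i) j = blk off b L u j - blk off b L v j"
  by (simp add: blk_def algebra_simps sum_subtractf)

lemma opl_add_vec: "opl off xs (\<lambda>i. u i + v i) j = opl off xs u j + opl off xs v j"
  by (induction off xs u arbitrary: j rule: opl.induct) (auto simp: blk_add_vec)
lemma opl_smul_vec: "opl off xs (\<lambda>i. c * u i) j = c * opl off xs u j"
  by (induction off xs u arbitrary: j rule: opl.induct) (auto simp: blk_smul_vec algebra_simps)
lemma opl_sub_vec: "opl off xs (\<lambda>i. u i - v i) j = opl off xs u j - opl off xs v j"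
  by (induction off xs u arbitrary: j rule: opl.induct) (auto simp: blk_sub_vec)

lemma blk_sub_mat: "blk off b L u j - blk off b L' u j = blk off b (lsub b L L') u j"
proof (cases "off \<le> j \<and> j < off + b")
  case True
  have "blk off b L u j - blk off b L' u j = (\<Sum>s<b. (L!(j-off)!s - L'!(j-off)!s) * u (off + s))"
    using True by (simp add: blk_def sum_subtractf left_diff_distrib)
  also have "\<dots> = blk off b (lsub b L L') u j"
    using True by (auto simp: blk_def lsub_nth intro!: sum.cong)
  finally show ?thesis .
qed (auto simp: blk_out)
lemma blk_add_mat: "blk off b L u j + blk off b L' u j = blk off b (ladd b L L') u j"
proof (cases "off \<le> j \<and> j < off + b")
  case True
  have "blk off b L u j + blk off b L' u j = (\<Sum>s<b. (L!(j-off)!s + L'!(j-off)!s) * u (off + s))"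
    using True by (simp add: blk_def sum.distrib distrib_right)
  also have "\<dots> = blk off b (ladd b L L') u j"
    using True by (auto simp: blk_def ladd_nth intro!: sum.cong)
  finally show ?thesis .
qed (auto simp: blk_out)

lemma opl_sub_mat:
  "opl off (map (\<lambda>x. (sz x, F x)) xs) u j - opl off (map (\<lambda>x. (sz x, G x)) xs) u j
   = opl off (map (\<lambda>x. (sz x, lsub (sz x) (F x) (G x))) xs) u j"
proof (induction xs arbitrary: off)
  case Nil then show ?case by simp
next
  case (Cons x xs) then show ?case by (simp add: blk_sub_mat[symmetric] algebra_simps)
qed

lemma opl_add_mat:
  "opl off (map (\<lambda>x. (sz x, F x)) xs) u j + opl off (map (\<lambda>x. (sz x, G x)) xs) u j
   = opl off (map (\<lambda>x. (sz x, ladd (sz x) (F x) (G x))) xs) u j"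
proof (induction xs arbitrary: off)
  case Nil then show ?case by simp
next
  case (Cons x xs) then show ?case by (simp add: blk_add_mat[symmetric] algebra_simps)
qed

lemma blk_lone: "blk off b (lone b) u j = (if off \<le> j \<and> j < off + b then u j else 0)"
proof (cases "off \<le> j \<and> j < off + b")
  case True
  have "blk off b (lone b) u j = (\<Sum>s<b. (if j - off = s then 1 else 0) * u (off + s))"
    using True by (auto simp: blk_def lone_nth intro!: sum.cong)
  also have "\<dots> = u (off + (j - off))"
    using True by (simp add: if_distrib[of "\<lambda>x. x * _"] sum.delta cong: if_cong) linarith
  finally show ?thesis using True by simp
qed (auto simp: blk_out)

lemma blk_lscal: "blk off b (lscal b c) u j = (if off \<le> j \<and> j < off + b then c * u j else 0)"
proof (cases "off \<le> j \<and> j < off + b")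
  case True
  have "blk off b (lscal b c) u j = (\<Sum>s<b. (if j - off = s then c else 0) * u (off + s))"
    using True by (auto simp: blk_def lscal_nth intro!: sum.cong)
  also have "\<dots> = c * u (off + (j - off))"
    using True by (simp add: if_distrib[of "\<lambda>x. x * _"] sum.delta cong: if_cong) linarith
  finally show ?thesis using True by simp
qed (auto simp: blk_out)

lemma blk_lzero: "blk off b (lzero b) u j = 0"
  by (auto simp: blk_def lzero_nth intro!: sum.neutral)

lemma opl_lone: "opl off (map (\<lambda>x. (sz x, lone (sz x))) xs) u j
   = (if off \<le> j \<and> j < off + sum_list (map sz xs) then u j else 0)"
  by (induction xs arbitrary: off) (auto simp: blk_lone)

lemma opl_lzero: "opl off (map (\<lambda>x. (sz x, lzero (sz x))) xs) u j = 0"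
  by (induction xs arbitrary: off) (auto simp: blk_lzero)

lemma opl_pow:
  assumes "off \<le> j" "j < off + sum_list (map sz xs)"
  shows "(opl off (map (\<lambda>x. (sz x, F x)) xs) ^^ n) u j = opl off (map (\<lambda>x. (sz x, lpow (sz x) (F x) n)) xs) u j"
  using assms
proof (induction n arbitrary: j)
  case 0 then show ?case by (simp add: opl_lone)
next
  case (Suc n)
  have "(opl off (map (\<lambda>x. (sz x, F x)) xs) ^^ Suc n) u
      = opl off (map (\<lambda>x. (sz x, F x)) xs) ((opl off (map (\<lambda>x. (sz x, F x)) xs) ^^ n) u)" by simp
  also have "\<dots> = opl off (map (\<lambda>x. (sz x, F x)) xs) (opl off (map (\<lambda>x. (sz x, lpow (sz x) (F x) n)) xs) u)"
    by (rule opl_cong) (use Suc.IH in \<open>simp add: tot_map\<close>)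
  also have "\<dots> = opl off (map (\<lambda>x. (sz x, lpow (sz x) (F x) (Suc n))) xs) u"
    by (simp add: opl_comp)
  finally show ?case by simp
qed

lemma opl_lsum:
  "(\<Sum>t<n. opl off (map (\<lambda>x. (sz x, lpow (sz x) (F x) t)) xs) u j) = opl off (map (\<lambda>x. (sz x, lsum (sz x) (F x) n)) xs) u j"
proof (induction n)
  case 0 then show ?case by (simp add: opl_lzero)
next
  case (Suc n) then show ?case by (simp add: opl_add_mat)
qed

lemma blk_dvd: "(\<And>t. off \<le> t \<Longrightarrow> t < off + b \<Longrightarrow> (q::int) dvd u t) \<Longrightarrow> q dvd blk off b L u j"
  by (auto simp: blk_def intro!: dvd_sum dvd_mult)

lemma opl_dvd: "(\<And>t. off \<le> t \<Longrightarrow> t < off + tot xs \<Longrightarrow> (q::int) dvd u t) \<Longrightarrow> q dvd opl off xs u j"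
proof (induction off xs u arbitrary: j rule: opl.induct)
  case (1 off u) then show ?case by simp
next
  case (2 off b L xs u)
  have "q dvd blk off b L u j" by (rule blk_dvd) (use 2(2) in auto)
  moreover have "q dvd opl (off + b) xs u j" by (rule 2(1)) (use 2(2) in auto)
  ultimately show ?case by simp
qed

lemma opl_scal_dvd:
  assumes "\<forall>x\<in>set xs. coprime (c x) (q::int)" "off \<le> j" "j < off + sum_list (map sz xs)"
    and "q dvd opl off (map (\<lambda>x. (sz x, lscal (sz x) (c x))) xs) u j"
  shows "q dvd u j"
  using assms
proof (induction xs arbitrary: off)
  case Nil then show ?case by simp
next
  case (Cons x xs)
  show ?case
  proof (cases "j < off + sz x")
    case True
    then have "opl off (map (\<lambda>x. (sz x, lscal (sz x) (c x))) (x # xs)) u j = c x * u j"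
      using Cons.prems by (simp add: blk_lscal opl_out tot_map)
    then have "q dvd c x * u j" using Cons.prems by simp
    then show ?thesis using Cons.prems(1)
      by (meson coprime_commute coprime_dvd_mult_right_iff list.set_intros(1))
  next
    case False
    then have "opl off (map (\<lambda>x. (sz x, lscal (sz x) (c x))) (x # xs)) u j
        = opl (off + sz x) (map (\<lambda>x. (sz x, lscal (sz x) (c x))) xs) u j"
      by (simp add: blk_lscal)
    then show ?thesis using Cons.prems Cons.IH[of "off + sz x"] False by simp
  qed
qed


datatype bi = BI (bsz: nat) (bmat: imat) (badj: imat) (bc: int) (badjT: imat) (bcT: int)

definition good_blk :: "nat \<Rightarrow> int \<Rightarrow> bi \<Rightarrow> bool" where
  "good_blk m p x \<longleftrightarrow> lmul (bsz x) (badj x) (bmat x) = lscal (bsz x) (bc x)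
     \<and> lsub (bsz x) (lmul (bsz x) (badjT x) (lpow (bsz x) (bmat x) m)) (badjT x) = lscal (bsz x) (bcT x)
     \<and> coprime (bc x) p \<and> coprime (bcT x) p"

definition Lop :: "bi list \<Rightarrow> (nat \<Rightarrow> int) \<Rightarrow> nat \<Rightarrow> int" where
  "Lop xs = opl 0 (map (\<lambda>x. (bsz x, bmat x)) xs)"

definition dimb :: "bi list \<Rightarrow> nat" where
  "dimb xs = sum_list (map bsz xs)"

lemma Lop_dvd: "(\<And>t. t < dimb xs \<Longrightarrow> (Q::int) dvd u t) \<Longrightarrow> Q dvd Lop xs u j"
  unfolding Lop_def dimb_def by (rule opl_dvd) (simp add: tot_map)

lemma Lop_sub: "Lop xs (\<lambda>i. u i - v i) j = Lop xs u j - Lop xs v j"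
  unfolding Lop_def by (rule opl_sub_vec)

lemma Lop_add: "Lop xs (\<lambda>i. u i + v i) j = Lop xs u j + Lop xs v j"
  unfolding Lop_def by (rule opl_add_vec)

lemma Lop_congmod:
  assumes "\<And>t. t < dimb xs \<Longrightarrow> u t mod Q = v t mod Q"
  shows "Lop xs u j mod Q = Lop xs v j mod Q"
proof -
  have "Q dvd Lop xs (\<lambda>i. u i - v i) j"
    by (rule Lop_dvd) (use assms in \<open>simp add: mod_eq_dvd_iff\<close>)
  then show ?thesis by (simp add: Lop_sub mod_eq_dvd_iff)
qed

lemma fam_F1:
  assumes g: "\<forall>x\<in>set xs. good_blk m p x"
    and h: "\<And>j. j < dimb xs \<Longrightarrow> p ^ r dvd Lop xs u j" and j: "j < dimb xs"
  shows "p ^ r dvd u j"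
proof -
  let ?B = "opl 0 (map (\<lambda>x. (bsz x, badj x)) xs)"
  have "p ^ r dvd ?B (Lop xs u) j"
    by (rule opl_dvd) (use h in \<open>simp add: tot_map dimb_def\<close>)
  also have "?B (Lop xs u) = opl 0 (map (\<lambda>x. (bsz x, lmul (bsz x) (badj x) (bmat x))) xs) u"
    unfolding Lop_def by (rule opl_comp)
  also have "\<dots> = opl 0 (map (\<lambda>x. (bsz x, lscal (bsz x) (bc x))) xs) u"
    using g by (simp add: good_blk_def cong: map_cong)
  finally show ?thesis
    by (rule opl_scal_dvd[rotated 3]) (use g j in \<open>auto simp: good_blk_def dimb_def\<close>)
qed

lemma fam_F2:
  assumes g: "\<forall>x\<in>set xs. good_blk m p x"
    and h: "\<And>j. j < dimb xs \<Longrightarrow> p ^ r dvd (Lop xs ^^ m) u j - u j" and j: "j < dimb xs"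
  shows "p ^ r dvd u j"
proof -
  let ?B = "opl 0 (map (\<lambda>x. (bsz x, badjT x)) xs)"
  have "p ^ r dvd ?B (\<lambda>i. (Lop xs ^^ m) u i - u i) j"
    by (rule opl_dvd) (use h in \<open>simp add: tot_map dimb_def\<close>)
  also have "?B (\<lambda>i. (Lop xs ^^ m) u i - u i) j = ?B ((Lop xs ^^ m) u) j - ?B u j"
    by (rule opl_sub_vec)
  also have "?B ((Lop xs ^^ m) u) = ?B (opl 0 (map (\<lambda>x. (bsz x, lpow (bsz x) (bmat x) m)) xs) u)"
    by (rule opl_cong) (simp add: Lop_def opl_pow tot_map)
  also have "\<dots> = opl 0 (map (\<lambda>x. (bsz x, lmul (bsz x) (badjT x) (lpow (bsz x) (bmat x) m))) xs) u"
    by (rule opl_comp)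
  also have "opl 0 (map (\<lambda>x. (bsz x, lmul (bsz x) (badjT x) (lpow (bsz x) (bmat x) m))) xs) u j - ?B u j
      = opl 0 (map (\<lambda>x. (bsz x, lsub (bsz x) (lmul (bsz x) (badjT x) (lpow (bsz x) (bmat x) m)) (badjT x))) xs) u j"
    by (rule opl_sub_mat)
  also have "\<dots> = opl 0 (map (\<lambda>x. (bsz x, lscal (bsz x) (bcT x))) xs) u j"
    using g by (simp add: good_blk_def cong: map_cong)
  finally show ?thesis
    by (rule opl_scal_dvd[rotated 3]) (use g j in \<open>auto simp: good_blk_def dimb_def\<close>)
qed


lemma finite_I: "finite {(i, j). i < (n::nat) \<and> j < (d i::nat)}"
proof -
  have "{(i, j). i < n \<and> j < d i} \<subseteq> (SIGMA i:{..<n}. {..<d i})" by auto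
  then show ?thesis by (rule finite_subset) auto
qed

lemma product_psi:
  fixes n :: nat and d q :: "nat \<Rightarrow> nat" and xs :: "nat \<Rightarrow> bi list" and m :: nat
  defines "I \<equiv> {(i, j). i < n \<and> j < d i}"
  defines "P \<equiv> product_group I (\<lambda>(i, j). integer_mod_group (q i))"
  assumes qpos: "\<And>i. i < n \<Longrightarrow> q i > 0"
    and dim: "\<And>i. i < n \<Longrightarrow> dimb (xs i) = d i"
    and F1: "\<And>i u. i < n \<Longrightarrow> (\<And>j. j < d i \<Longrightarrow> int (q i) dvd Lop (xs i) u j) \<Longrightarrow> (\<And>j. j < d i \<Longrightarrow> int (q i) dvd u j)"
    and F2: "\<And>i u. i < n \<Longrightarrow> (\<And>j. j < d i \<Longrightarrow> int (q i) dvd (Lop (xs i) ^^ m) u j - u j) \<Longrightarrow> (\<And>j. j < d i \<Longrightarrow> int (q i) dvd u j)"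
  shows "\<exists>\<psi>. \<psi> \<in> iso P P \<and> (\<forall>x\<in>carrier P. (\<psi> ^^ m) x = x \<longrightarrow> x = \<one>\<^bsub>P\<^esub>)"
proof -
  define psi where "psi x = (\<lambda>(i, j)\<in>I. Lop (xs i) (\<lambda>t. x (i, t)) j mod int (q i))" for x :: "nat \<times> nat \<Rightarrow> int"
  have carP: "carrier P = (\<Pi>\<^sub>E (i, j)\<in>I. {0..<int (q i)})"
    unfolding P_def carrier_product_group
  proof (rule PiE_cong)
    fix k assume "k \<in> I"
    then obtain i j where k: "k = (i, j)" "i < n" by (auto simp: I_def)
    then show "carrier (case k of (i, j) \<Rightarrow> integer_mod_group (q i)) = (case k of (i, j) \<Rightarrow> {0..<int (q i)})"
      using qpos[of i] by (simp add: carrier_integer_mod_group)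
  qed
  have memP: "x \<in> carrier P \<longleftrightarrow> (\<forall>i j. (i, j) \<in> I \<longrightarrow> 0 \<le> x (i, j) \<and> x (i, j) < int (q i)) \<and> (\<forall>k. k \<notin> I \<longrightarrow> x k = undefined)" for x
    unfolding carP by (auto simp: PiE_iff extensional_def)
  have IiD: "(i, j) \<in> I \<longleftrightarrow> i < n \<and> j < d i" for i j by (simp add: I_def)
  have multP: "x \<otimes>\<^bsub>P\<^esub> y = (\<lambda>(i, j)\<in>I. (x (i, j) + y (i, j)) mod int (q i))" for x y
    unfolding P_def by (auto simp: fun_eq_iff)
  have oneP: "\<one>\<^bsub>P\<^esub> = (\<lambda>(i, j)\<in>I. 0)"
    unfolding P_def by (auto simp: fun_eq_iff)
  have psi_car: "psi x \<in> carrier P" for x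
    unfolding memP psi_def using qpos by (auto simp: IiD)
  have modx: "x \<in> carrier P \<Longrightarrow> (i, j) \<in> I \<Longrightarrow> x (i, j) mod int (q i) = x (i, j)" for x i j
    unfolding memP by auto
  have hom: "psi \<in> hom P P"
  proof (rule homI)
    fix x show "psi x \<in> carrier P" by (rule psi_car)
  next
    fix x y assume xy: "x \<in> carrier P" "y \<in> carrier P"
    show "psi (x \<otimes>\<^bsub>P\<^esub> y) = psi x \<otimes>\<^bsub>P\<^esub> psi y"
    proof (rule ext, clarify)
      fix i j
      show "psi (x \<otimes>\<^bsub>P\<^esub> y) (i, j) = (psi x \<otimes>\<^bsub>P\<^esub> psi y) (i, j)"
      proof (cases "(i, j) \<in> I")
        case True
        then have ij: "i < n" "j < d i" by (auto simp: IiD)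
        have "psi (x \<otimes>\<^bsub>P\<^esub> y) (i, j) = Lop (xs i) (\<lambda>t. (x \<otimes>\<^bsub>P\<^esub> y) (i, t)) j mod int (q i)"
          using True by (simp add: psi_def)
        also have "\<dots> = Lop (xs i) (\<lambda>t. x (i, t) + y (i, t)) j mod int (q i)"
          by (rule Lop_congmod) (use ij dim in \<open>simp add: multP IiD\<close>)
        also have "\<dots> = (Lop (xs i) (\<lambda>t. x (i, t)) j mod int (q i) + Lop (xs i) (\<lambda>t. y (i, t)) j mod int (q i)) mod int (q i)"
          by (simp add: Lop_add mod_add_eq)
        also have "\<dots> = (psi x \<otimes>\<^bsub>P\<^esub> psi y) (i, j)"
          using True by (simp add: multP psi_def)
        finally show ?thesis .
      next
        case False then show ?thesis by (simp add: psi_def multP)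
      qed
    qed
  qed
  have inj: "inj_on psi (carrier P)"
  proof (rule inj_onI)
    fix x y assume xy: "x \<in> carrier P" "y \<in> carrier P" and e: "psi x = psi y"
    show "x = y"
    proof (rule ext, clarify)
      fix i j
      show "x (i, j) = y (i, j)"
      proof (cases "(i, j) \<in> I")
        case True
        then have ij: "i < n" "j < d i" by (auto simp: IiD)
        have "int (q i) dvd Lop (xs i) (\<lambda>t. x (i, t) - y (i, t)) j'" if "j' < d i" for j'
        proof -
          have "psi x (i, j') = psi y (i, j')" using e by simp
          then have "Lop (xs i) (\<lambda>t. x (i, t)) j' mod int (q i) = Lop (xs i) (\<lambda>t. y (i, t)) j' mod int (q i)"
            using that ij by (simp add: psi_def IiD)
          then show ?thesis by (simp add: Lop_sub mod_eq_dvd_iff)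
        qed
        then have "int (q i) dvd x (i, j) - y (i, j)"
          using F1[OF ij(1), of "\<lambda>t. x (i, t) - y (i, t)"] ij by blast
        then have "x (i, j) mod int (q i) = y (i, j) mod int (q i)" by (simp add: mod_eq_dvd_iff)
        then show ?thesis using modx[OF xy(1) True] modx[OF xy(2) True] by simp
      next
        case False then show ?thesis using xy unfolding memP by auto
      qed
    qed
  qed
  have finP: "finite (carrier P)"
    unfolding carP by (rule finite_PiE) (auto simp: I_def finite_I)
  have bij: "bij_betw psi (carrier P) (carrier P)"
    unfolding bij_betw_def using inj endo_inj_surj[OF finP _ inj] psi_car by auto
  have iso: "psi \<in> iso P P" using hom bij by (simp add: iso_def)
  have powf: "(psi ^^ k) x (i, j) = (Lop (xs i) ^^ k) (\<lambda>t. x (i, t)) j mod int (q i)"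
    if x: "x \<in> carrier P" and ij: "(i, j) \<in> I" for x i j k
    using ij
  proof (induction k arbitrary: j)
    case 0 then show ?case using modx[OF x] by simp
  next
    case (Suc k)
    have ij: "i < n" "j < d i" using Suc.prems by (auto simp: IiD)
    have "(psi ^^ Suc k) x (i, j) = Lop (xs i) (\<lambda>t. (psi ^^ k) x (i, t)) j mod int (q i)"
      using Suc.prems by (simp add: psi_def)
    also have "\<dots> = Lop (xs i) ((Lop (xs i) ^^ k) (\<lambda>t. x (i, t))) j mod int (q i)"
      by (rule Lop_congmod) (use Suc.IH ij dim in \<open>simp add: IiD\<close>)
    finally show ?case by simp
  qed
  have fpf: "\<forall>x\<in>carrier P. (psi ^^ m) x = x \<longrightarrow> x = \<one>\<^bsub>P\<^esub>"
  proof (intro ballI impI)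
    fix x assume x: "x \<in> carrier P" and e: "(psi ^^ m) x = x"
    show "x = \<one>\<^bsub>P\<^esub>"
    proof (rule ext, clarify)
      fix i j
      show "x (i, j) = \<one>\<^bsub>P\<^esub> (i, j)"
      proof (cases "(i, j) \<in> I")
        case True
        then have ij: "i < n" "j < d i" by (auto simp: IiD)
        have "int (q i) dvd (Lop (xs i) ^^ m) (\<lambda>t. x (i, t)) j' - x (i, j')" if "j' < d i" for j'
        proof -
          have "(psi ^^ m) x (i, j') = x (i, j')" using e by simp
          then have "(Lop (xs i) ^^ m) (\<lambda>t. x (i, t)) j' mod int (q i) = x (i, j') mod int (q i)"
            using powf[OF x, of i j' m] modx[OF x, of i j'] that ij by (simp add: IiD)
          then show ?thesis by (simp add: mod_eq_dvd_iff)
        qed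
        then have "int (q i) dvd x (i, j)"
          using F2[OF ij(1), of "\<lambda>t. x (i, t)"] ij by blast
        then have "x (i, j) = 0" using modx[OF x True] by simp
        then show ?thesis using True by (simp add: oneP)
      next
        case False then show ?thesis using x unfolding memP by (simp add: oneP)
      qed
    qed
  qed
  show ?thesis using iso fpf by blast
qed

lemma transport_psi:
  assumes G: "group G" and P: "group P" and h: "h \<in> iso G P"
    and psi: "\<psi> \<in> iso P P" and fpf: "\<forall>x\<in>carrier P. (\<psi> ^^ m) x = x \<longrightarrow> x = \<one>\<^bsub>P\<^esub>"
  shows "\<exists>\<chi>. \<chi> \<in> iso G G \<and> (\<forall>g\<in>carrier G. (\<chi> ^^ m) g = g \<longrightarrow> g = \<one>\<^bsub>G\<^esub>)"
proof -
  interpret G: group G by (rule G)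
  interpret P: group P by (rule P)
  let ?hi = "inv_into (carrier G) h"
  have hi: "?hi \<in> iso P G" using G.iso_set_sym[OF h] .
  define chi where "chi = ?hi \<circ> (\<psi> \<circ> h)"
  have chi_iso: "chi \<in> iso G G" unfolding chi_def
    by (rule iso_set_trans[OF iso_set_trans[OF h psi] hi])
  have hb: "bij_betw h (carrier G) (carrier P)" using h by (simp add: iso_def)
  have hhom: "h \<in> hom G P" using h by (simp add: iso_def)
  have psic: "y \<in> carrier P \<Longrightarrow> \<psi> y \<in> carrier P" for y using psi by (auto simp: iso_def hom_def)
  have psipc: "y \<in> carrier P \<Longrightarrow> (\<psi> ^^ k) y \<in> carrier P" for y k
    by (induction k) (auto simp: psic)
  have h_hi: "y \<in> carrier P \<Longrightarrow> h (?hi y) = y" for y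
    using hb by (simp add: bij_betw_inv_into_right)
  have hc: "g \<in> carrier G \<Longrightarrow> h g \<in> carrier P" for g using hhom by (auto simp: hom_def)
  have chipow: "g \<in> carrier G \<Longrightarrow> (chi ^^ k) g = ?hi ((\<psi> ^^ k) (h g))" for g k
  proof (induction k)
    case 0 then show ?case using hb by (simp add: bij_betw_inv_into_left)
  next
    case (Suc k)
    then show ?case by (simp add: chi_def h_hi psipc hc)
  qed
  have "g = \<one>\<^bsub>G\<^esub>" if g: "g \<in> carrier G" and e: "(chi ^^ m) g = g" for g
  proof -
    have "?hi ((\<psi> ^^ m) (h g)) = g" using chipow[OF g] e by simp
    then have "(\<psi> ^^ m) (h g) = h g" using h_hi[OF psipc[OF hc[OF g]]] by metis
    then have "h g = \<one>\<^bsub>P\<^esub>" using fpf hc[OF g] by blast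
    moreover have "h \<one>\<^bsub>G\<^esub> = \<one>\<^bsub>P\<^esub>"
      using hhom by (simp add: G.is_group P.is_group group_hom.hom_one group_hom_axioms_def group_hom_def)
    ultimately show ?thesis using hb g by (metis G.one_closed bij_betw_def inj_onD)
  qed
  then show ?thesis using chi_iso by blast
qed


definition goodM :: "nat \<Rightarrow> (nat \<times> imat) \<Rightarrow> bool" where
  "goodM m x \<longleftrightarrow> lpow (fst x) (snd x) m = lone (fst x) \<and> lsum (fst x) (snd x) m = lzero (fst x)"

lemma opl_map_id: "opl off bs = opl off (map (\<lambda>x. (fst x, snd x)) bs)"
  by simp

lemma assemble:
  fixes G :: "('a, 'b) monoid_scheme"
    and k n m :: nat and p r d :: "nat \<Rightarrow> nat" and xs :: "nat \<Rightarrow> bi list" and bsM :: "(nat \<times> imat) list"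
  assumes cg: "comm_group G" and fin: "finite (carrier G)"
    and pr: "\<forall>i<n. Factorial_Ring.prime (p i) \<and> r i \<ge> 1 \<and> d i \<ge> 1"
    and iso: "G \<cong> product_group {(i, j). i < n \<and> j < d i} (\<lambda>(i, j). integer_mod_group (p i ^ r i))"
    and mpos: "m > 0"
    and Mtot: "tot bsM = k" and Mgood: "\<forall>x\<in>set bsM. goodM m x"
    and xsdim: "\<And>i. i < n \<Longrightarrow> dimb (xs i) = d i"
    and xsgood: "\<And>i. i < n \<Longrightarrow> \<forall>x\<in>set (xs i). good_blk m (int (p i)) x"
  shows "\<exists>\<phi>. \<phi> \<in> iso (wreath_Zk G k) (wreath_Zk G k) \<and> finite_reidemeister (wreath_Zk G k) \<phi>"
proof -
  interpret G: comm_group G by (rule cg)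
  let ?P = "product_group {(i, j). i < n \<and> j < d i} (\<lambda>(i, j). integer_mod_group (p i ^ r i))"
  obtain h where h: "h \<in> iso G ?P" using iso unfolding is_iso_def by blast
  have qpos: "\<And>i. i < n \<Longrightarrow> p i ^ r i > 0" using pr by (auto simp: prime_gt_0_nat)
  have F1: "\<And>j. j < d i \<Longrightarrow> int (p i ^ r i) dvd u j"
    if i: "i < n" and hyp: "\<And>j. j < d i \<Longrightarrow> int (p i ^ r i) dvd Lop (xs i) u j" for i u
    using fam_F1[OF xsgood[OF i], of "r i" u] hyp xsdim[OF i] by simp
  have F2: "\<And>j. j < d i \<Longrightarrow> int (p i ^ r i) dvd u j"
    if i: "i < n" and hyp: "\<And>j. j < d i \<Longrightarrow> int (p i ^ r i) dvd (Lop (xs i) ^^ m) u j - u j" for i u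
    using fam_F2[OF xsgood[OF i], of "r i" u] hyp xsdim[OF i] by simp
  obtain psi where psi: "psi \<in> iso ?P ?P" and psifpf: "\<forall>x\<in>carrier ?P. (psi ^^ m) x = x \<longrightarrow> x = \<one>\<^bsub>?P\<^esub>"
  proof -
    have "\<exists>\<psi>. \<psi> \<in> iso ?P ?P \<and> (\<forall>x\<in>carrier ?P. (\<psi> ^^ m) x = x \<longrightarrow> x = \<one>\<^bsub>?P\<^esub>)"
    proof (rule product_psi[where n=n and q="\<lambda>i. p i ^ r i" and xs=xs and d=d and m=m])
      show "\<And>i. i < n \<Longrightarrow> 0 < p i ^ r i" by (rule qpos)
      show "\<And>i. i < n \<Longrightarrow> dimb (xs i) = d i" by (rule xsdim)
      show "\<And>i u j. i < n \<Longrightarrow> (\<And>j. j < d i \<Longrightarrow> int (p i ^ r i) dvd Lop (xs i) u j) \<Longrightarrow> j < d i \<Longrightarrow> int (p i ^ r i) dvd u j"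
        by (rule F1)
      show "\<And>i u j. i < n \<Longrightarrow> (\<And>j. j < d i \<Longrightarrow> int (p i ^ r i) dvd (Lop (xs i) ^^ m) u j - u j) \<Longrightarrow> j < d i \<Longrightarrow> int (p i ^ r i) dvd u j"
        by (rule F2)
    qed
    then show ?thesis using that by blast
  qed
  have Pg: "group ?P" by (rule product_group) auto
  obtain chi where chi: "chi \<in> iso G G" and chifpf: "\<forall>g\<in>carrier G. (chi ^^ m) g = g \<longrightarrow> g = \<one>\<^bsub>G\<^esub>"
    using transport_psi[OF G.is_group Pg h psi psifpf] by blast
  let ?M = "opl 0 bsM"
  have M_Zk: "?M v \<in> Zk k" for v using Mtot by (auto simp: Zk_def opl_out)
  have M_add: "?M (\<lambda>i. u i + v i) = (\<lambda>i. ?M u i + ?M v i)" for u v by (simp add: opl_add_vec fun_eq_iff)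
  have M_smul: "?M (\<lambda>i. c * v i) = (\<lambda>i. c * ?M v i)" for c v by (simp add: opl_smul_vec fun_eq_iff)
  have Mpow: "(?M ^^ j) v i = opl 0 (map (\<lambda>x. (fst x, lpow (fst x) (snd x) j)) bsM) v i" if "i < k" for v i j
    using opl_pow[where off=0 and j=i and sz=fst and xs=bsM and F=snd and n=j and u=v] that Mtot by (simp add: tot_def)
  have Mpow_out: "(?M ^^ j) v i = 0" if "k \<le> i" "v \<in> Zk k" for v i j
  proof (cases j)
    case 0 then show ?thesis using that by (simp add: Zk_def)
  next
    case (Suc j') then show ?thesis using that Mtot by (simp add: opl_out)
  qed
  have M_pow: "(?M ^^ m) v = v" if v: "v \<in> Zk k" for v
  proof (rule ext)
    fix i show "(?M ^^ m) v i = v i"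
    proof (cases "i < k")
      case True
      have "(?M ^^ m) v i = opl 0 (map (\<lambda>x. (fst x, lone (fst x))) bsM) v i"
        using Mpow[OF True] Mgood by (simp add: goodM_def cong: map_cong)
      also have "\<dots> = v i" using True Mtot by (simp add: opl_lone tot_def)
      finally show ?thesis .
    next
      case False then show ?thesis using Mpow_out v by (simp add: Zk_def)
    qed
  qed
  have M_sum: "(\<lambda>i. \<Sum>j<m. (?M ^^ j) v i) = (\<lambda>i. 0)" if v: "v \<in> Zk k" for v
  proof (rule ext)
    fix i show "(\<Sum>j<m. (?M ^^ j) v i) = 0"
    proof (cases "i < k")
      case True
      have "(\<Sum>j<m. (?M ^^ j) v i) = (\<Sum>j<m. opl 0 (map (\<lambda>x. (fst x, lpow (fst x) (snd x) j)) bsM) v i)"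
        using Mpow[OF True] by simp
      also have "\<dots> = opl 0 (map (\<lambda>x. (fst x, lsum (fst x) (snd x) m)) bsM) v i"
        by (rule opl_lsum)
      also have "\<dots> = opl 0 (map (\<lambda>x. (fst x, lzero (fst x))) bsM) v i"
        using Mgood by (simp add: goodM_def cong: map_cong)
      also have "\<dots> = 0" by (rule opl_lzero)
      finally show ?thesis .
    next
      case False then show ?thesis using Mpow_out v by simp
    qed
  qed
  interpret ws: wsetup G k m chi ?M
    by (unfold_locales) (use fin chi chifpf mpos M_Zk M_add M_smul M_pow M_sum in auto)
  show ?thesis by (rule ws.main_abstract)
qed


definition "bS2_2 = BI 2 [[0, -1], [1, -1]] [[-1, 1], [-1, 0]] (1) [[-1, -1], [1, -2]] (3)"
definition "bS3_2 = BI 3 [[0, 0, -1], [1, 0, -1], [0, 1, 0]] [[1, -1, 0], [0, 0, -1], [1, 0, 0]] (-1) [[4, -2, 1], [-1, 2, -1], [2, -1, 2]] (-3)"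
definition "bR2_2 = BI 2 [[0, -1], [1, 0]] [[0, 1], [-1, 0]] (1) [[-2, 0], [0, -2]] (4)"
definition "bT3_2 = BI 3 [[0, 0, -1], [1, 0, 1], [0, 1, 0]] [[-1, -1, 0], [0, 0, -1], [1, 0, 0]] (-1) [[0, 0, 1], [-1, 0, -1], [0, -1, 0]] (1)"
definition "bT2_2 = BI 1 [[2]] [[1]] (2) [[1]] (3)"
definition "bN1_3 = BI 1 [[-1]] [[1]] (-1) [[1]] (-2)"
definition "bS3_3 = BI 3 [[0, 0, -1], [1, 0, -1], [0, 1, 0]] [[1, -1, 0], [0, 0, -1], [1, 0, 0]] (-1) [[5, -1, 2], [-2, 4, 1], [1, -2, 4]] (-9)"
definition "bS4_3 = BI 4 [[0, 0, 0, -1], [1, 0, 0, -1], [0, 1, 0, -1], [0, 0, 1, -1]] [[-1, 1, 0, 0], [-1, 0, 1, 0], [-1, 0, 0, 1], [-1, 0, 0, 0]] (1) [[-3, 2, -3, 2], [-1, -1, -1, -1], [1, 1, -4, 1], [-2, 3, -2, -2]] (5)"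
definition "bS5_3 = BI 5 [[0, 0, 0, 0, -1], [1, 0, 0, 0, 0], [0, 1, 0, 0, -1], [0, 0, 1, 0, 0], [0, 0, 0, 1, 0]] [[0, -1, 0, 0, 0], [1, 0, -1, 0, 0], [0, 0, 0, -1, 0], [0, 0, 0, 0, -1], [1, 0, 0, 0, 0]] (-1) [[8, 2, -4, -1, 2], [-4, 8, 2, -4, -1], [1, -2, 4, 1, -2], [4, 1, -2, 4, 1], [-2, 4, 1, -2, 4]] (-9)"
definition "bN1_5 = BI 1 [[-1]] [[1]] (-1) [[1]] (-2)"
definition "bS2_5 = BI 2 [[0, -1], [1, -1]] [[-1, 1], [-1, 0]] (1) [[-1, -1], [1, -2]] (3)"
definition "bS3_5 = BI 3 [[0, 0, -1], [1, 0, -1], [0, 1, 0]] [[1, -1, 0], [0, 0, -1], [1, 0, 0]] (-1) [[1, -2, 1], [-1, -1, -1], [2, -1, -1]] (-3)"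
definition "bN1_35 = BI 1 [[-1]] [[1]] (-1) [[1]] (-2)"
definition "bS2_35 = BI 2 [[0, -1], [1, -1]] [[-1, 1], [-1, 0]] (1) [[-1, -1], [1, -2]] (3)"
definition "bS5_35 = BI 5 [[0, 0, 0, 0, -1], [1, 0, 0, 0, 0], [0, 1, 0, 0, -1], [0, 0, 1, 0, 0], [0, 0, 0, 1, 0]] [[0, -1, 0, 0, 0], [1, 0, -1, 0, 0], [0, 0, 0, -1, 0], [0, 0, 0, 0, -1], [1, 0, 0, 0, 0]] (-1) [[116482, -38051, -65951, 49306, 28909], [9142, 116482, -38051, -65951, 49306], [-49306, -28909, 50531, 11255, -37042], [65951, -49306, -28909, 50531, 11255], [38051, 65951, -49306, -28909, 50531]] (-182523)"

lemma good_bS2_2: "good_blk 2 2 bS2_2" unfolding good_blk_def bS2_2_def by code_simp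
lemma good_bS3_2: "good_blk 2 2 bS3_2" unfolding good_blk_def bS3_2_def by code_simp
lemma good_bR2_2: "good_blk 2 3 bR2_2" unfolding good_blk_def bR2_2_def by code_simp
lemma good_bT3_2: "good_blk 2 3 bT3_2" unfolding good_blk_def bT3_2_def by code_simp
lemma good_bS3_3: "good_blk 3 2 bS3_3" unfolding good_blk_def bS3_3_def by code_simp
lemma good_bS4_3: "good_blk 3 2 bS4_3" unfolding good_blk_def bS4_3_def by code_simp
lemma good_bS5_3: "good_blk 3 2 bS5_3" unfolding good_blk_def bS5_3_def by code_simp
lemma good_bS2_5: "good_blk 5 2 bS2_5" unfolding good_blk_def bS2_5_def by code_simp
lemma good_bS3_5: "good_blk 5 2 bS3_5" unfolding good_blk_def bS3_5_def by code_simp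
lemma good_bS2_35: "good_blk 35 2 bS2_35" unfolding good_blk_def bS2_35_def by code_simp
lemma good_bS5_35: "good_blk 35 2 bS5_35" unfolding good_blk_def bS5_35_def by code_simp

lemma cop_small:
  assumes "Factorial_Ring.prime (p::nat)" "\<not> p dvd c"
  shows "coprime (int c) (int p)"
proof -
  have "Factorial_Ring.prime (int p)" using assms(1) by simp
  moreover have "\<not> int p dvd int c" using assms(2) by simp
  ultimately have "coprime (int p) (int c)" by (rule prime_imp_coprime)
  then show ?thesis by (simp add: coprime_commute)
qed

lemma prime_dvd_small: "Factorial_Ring.prime (p::nat) \<Longrightarrow> p dvd c \<Longrightarrow> c \<noteq> 0 \<Longrightarrow> p \<le> c"
  by (simp add: dvd_imp_le)

lemma cop2: "Factorial_Ring.prime (p::nat) \<Longrightarrow> p \<noteq> 2 \<Longrightarrow> coprime (2::int) (int p)"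
  using cop_small[of p 2] prime_dvd_small[of p 2] prime_ge_2_nat[of p] by fastforce
lemma cop3: "Factorial_Ring.prime (p::nat) \<Longrightarrow> p \<noteq> 3 \<Longrightarrow> p \<noteq> 2 \<Longrightarrow> coprime (3::int) (int p)"
proof -
  assume a: "Factorial_Ring.prime p" "p \<noteq> 3" "p \<noteq> 2"
  have "\<not> p dvd 3"
  proof
    assume "p dvd 3"
    then have "p \<le> 3" by (rule dvd_imp_le) simp
    then show False using a prime_ge_2_nat[of p] by (metis Suc_1 eval_nat_numeral(3) le_SucE le_antisym)
  qed
  then show ?thesis using cop_small[OF a(1)] by (metis of_nat_numeral)
qed

lemma good_bT2_2: "Factorial_Ring.prime (p::nat) \<Longrightarrow> p \<noteq> 2 \<Longrightarrow> p \<noteq> 3 \<Longrightarrow> good_blk 2 (int p) bT2_2"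
proof -
  assume a: "Factorial_Ring.prime p" "p \<noteq> 2" "p \<noteq> 3"
  have l: "lmul 1 [[1]] [[2]] = lscal 1 2 \<and> lsub 1 (lmul 1 [[1]] (lpow 1 [[2]] 2)) [[1]] = lscal 1 3" by code_simp
  show ?thesis unfolding good_blk_def bT2_2_def using l cop2[OF a(1,2)] cop3[OF a(1,3,2)] by simp
qed

lemma good_bN1:
  assumes "Factorial_Ring.prime (p::nat)" "p \<noteq> 2" "odd m"
  shows "good_blk m (int p) (BI 1 [[-1]] [[1]] (-1) [[1]] (-2))"
proof -
  have pw: "lpow 1 [[-1]] m = [[-1]]"
  proof -
    have "lpow 1 [[-1]] (Suc (2 * t)) = [[-1]]" for t
      by (induction t) (simp_all add: lmul_def lone_def)
    moreover obtain t where "m = Suc (2 * t)" using assms(3) by (metis oddE Suc_eq_plus1)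
    ultimately show ?thesis by simp
  qed
  have l1: "lmul 1 [[1]] [[-1]] = lscal 1 (-1)" by code_simp
  have l2: "lsub 1 (lmul 1 [[1]] [[-1]]) [[1]] = lscal 1 (-2)" by code_simp
  have c1: "coprime (-1::int) (int p)" by simp
  have c2: "coprime (-2::int) (int p)" using cop2[OF assms(1,2)] by simp
  show ?thesis unfolding good_blk_def bi.sel pw by (intro conjI l1 l2 c1 c2)
qed

lemma goodM1: "goodM 2 (1, [[-1]])" unfolding goodM_def by code_simp
lemma goodM3: "goodM 3 (2, [[0, -1], [1, -1]])" unfolding goodM_def by code_simp
lemma goodM5: "goodM 5 (4, [[0, 0, 0, -1], [1, 0, 0, -1], [0, 1, 0, -1], [0, 0, 1, -1]])" unfolding goodM_def by code_simp
lemma goodM5_35: "goodM 35 (4, [[0, 0, 0, -1], [1, 0, 0, -1], [0, 1, 0, -1], [0, 0, 1, -1]])" unfolding goodM_def by code_simp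
lemma goodM7_35: "goodM 35 (6, [[0, 0, 0, 0, 0, -1], [1, 0, 0, 0, 0, -1], [0, 1, 0, 0, 0, -1], [0, 0, 1, 0, 0, -1], [0, 0, 0, 1, 0, -1], [0, 0, 0, 0, 1, -1]])" unfolding goodM_def by code_simp


lemma tot_rep: "tot (replicate a (b, A)) = a * b"
  by (induction a) auto
lemma dimb_rep: "dimb (replicate a x) = a * bsz x"
  by (induction a) (auto simp: dimb_def)
lemma dimb_cons: "dimb (x # xs) = bsz x + dimb xs"
  by (simp add: dimb_def)

lemma bsz_simps: "bsz bS2_2 = 2" "bsz bS3_2 = 3" "bsz bR2_2 = 2" "bsz bT3_2 = 3" "bsz bT2_2 = 1"
  "bsz bN1_3 = 1" "bsz bS3_3 = 3" "bsz bS4_3 = 4" "bsz bS5_3 = 5"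
  "bsz bN1_5 = 1" "bsz bS2_5 = 2" "bsz bS3_5 = 3" "bsz bN1_35 = 1" "bsz bS2_35 = 2" "bsz bS5_35 = 5"
  by (simp_all add: bS2_2_def bS3_2_def bR2_2_def bT3_2_def bT2_2_def bN1_3_def bS3_3_def bS4_3_def
      bS5_3_def bN1_5_def bS2_5_def bS3_5_def bN1_35_def bS2_35_def bS5_35_def)

theorem theorem1:
  fixes G :: "('a, 'b) monoid_scheme"
    and k n :: nat and p r d :: "nat \<Rightarrow> nat"
  assumes "k \<ge> 1"
    and "comm_group G" and "finite (carrier G)"
    and "\<forall>i<n. Factorial_Ring.prime (p i) \<and> r i \<ge> 1 \<and> d i \<ge> 1"
    and "inj_on (\<lambda>i. (p i, r i)) {..<n}"
    and "G \<cong> product_group {(i, j). i < n \<and> j < d i}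
                 (\<lambda>(i, j). integer_mod_group (p i ^ r i))"
    and "(\<forall>i<n. (p i = 2 \<or> p i = 3) \<longrightarrow> d i \<ge> 2)
       \<or> ((\<forall>i<n. p i \<noteq> 2) \<and> even k)
       \<or> ((\<forall>i<n. p i = 2 \<longrightarrow> d i \<ge> 2) \<and> 4 dvd k)
       \<or> ((\<forall>i<n. p i = 2 \<longrightarrow> d i \<ge> 3) \<and> even k)
       \<or> ((\<forall>i<n. p i = 2 \<longrightarrow> d i \<ge> 2 \<and> d i \<noteq> 3) \<and> even k \<and> k \<ge> 4)"
  shows "\<exists>\<phi>. \<phi> \<in> iso (wreath_Zk G k) (wreath_Zk G k) \<and> finite_reidemeister (wreath_Zk G k) \<phi>"
proof -
  have pr: "\<And>i. i < n \<Longrightarrow> Factorial_Ring.prime (p i)" using assms(4) by blast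
  have app: "\<exists>\<phi>. \<phi> \<in> iso (wreath_Zk G k) (wreath_Zk G k) \<and> finite_reidemeister (wreath_Zk G k) \<phi>"
    if "m > 0" "tot bsM = k" "\<forall>x\<in>set bsM. goodM m x" "\<And>i. i < n \<Longrightarrow> dimb (bl i) = d i"
       "\<And>i. i < n \<Longrightarrow> \<forall>x\<in>set (bl i). good_blk m (int (p i)) x" for m bsM bl
    by (rule assemble[OF assms(2,3,4,6) that])
  have case3: "\<exists>\<phi>. \<phi> \<in> iso (wreath_Zk G k) (wreath_Zk G k) \<and> finite_reidemeister (wreath_Zk G k) \<phi>"
    if c: "\<forall>i<n. p i = 2 \<longrightarrow> d i \<ge> 2" "4 dvd k"
  proof (rule app[where m=5 and bsM="replicate (k div 4) (4, [[0, 0, 0, -1], [1, 0, 0, -1], [0, 1, 0, -1], [0, 0, 1, -1]])"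
        and bl="\<lambda>i. if p i = 2 then (if even (d i) then replicate (d i div 2) bS2_5 else bS3_5 # replicate ((d i - 3) div 2) bS2_5)
                    else replicate (d i) bN1_5"])
    show "tot (replicate (k div 4) (4, [[0, 0, 0, -1], [1, 0, 0, -1], [0, 1, 0, -1], [0, 0, 1, -1]])) = k"
      using c(2) by (simp add: tot_rep)
    show "\<forall>x\<in>set (replicate (k div 4) (4, [[0, 0, 0, -1], [1, 0, 0, -1], [0, 1, 0, -1], [0, 0, 1, -1]])). goodM 5 x"
      using goodM5 by simp
    fix i assume i: "i < n"
    show "dimb (if p i = 2 then (if even (d i) then replicate (d i div 2) bS2_5 else bS3_5 # replicate ((d i - 3) div 2) bS2_5)
                    else replicate (d i) bN1_5) = d i"
      using c(1) i by (auto simp: dimb_rep dimb_cons bsz_simps elim!: oddE)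
    show "\<forall>x\<in>set (if p i = 2 then (if even (d i) then replicate (d i div 2) bS2_5 else bS3_5 # replicate ((d i - 3) div 2) bS2_5)
                    else replicate (d i) bN1_5). good_blk 5 (int (p i)) x"
      using good_bS2_5 good_bS3_5 good_bN1[OF pr[OF i], of 5] by (auto simp: bN1_5_def)
  qed simp
  from assms(7) consider
      (c1) "\<forall>i<n. (p i = 2 \<or> p i = 3) \<longrightarrow> d i \<ge> 2"
    | (c2) "(\<forall>i<n. p i \<noteq> 2) \<and> even k"
    | (c3) "(\<forall>i<n. p i = 2 \<longrightarrow> d i \<ge> 2) \<and> 4 dvd k"
    | (c4) "(\<forall>i<n. p i = 2 \<longrightarrow> d i \<ge> 3) \<and> even k"
    | (c5) "(\<forall>i<n. p i = 2 \<longrightarrow> d i \<ge> 2 \<and> d i \<noteq> 3) \<and> even k \<and> k \<ge> 4"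
    by blast
  then show ?thesis
  proof cases
    case c1
    show ?thesis
    proof (rule app[where m=2 and bsM="replicate k (1, [[-1]])"
        and bl="\<lambda>i. if p i = 2 then (if even (d i) then replicate (d i div 2) bS2_2 else bS3_2 # replicate ((d i - 3) div 2) bS2_2)
                    else if p i = 3 then (if even (d i) then replicate (d i div 2) bR2_2 else bT3_2 # replicate ((d i - 3) div 2) bR2_2)
                    else replicate (d i) bT2_2"])
      show "tot (replicate k (1, [[-1]])) = k" by (simp add: tot_rep)
      show "\<forall>x\<in>set (replicate k (1, [[-1]])). goodM 2 x" using goodM1 by simp
      fix i assume i: "i < n"
      show "dimb (if p i = 2 then (if even (d i) then replicate (d i div 2) bS2_2 else bS3_2 # replicate ((d i - 3) div 2) bS2_2)
                    else if p i = 3 then (if even (d i) then replicate (d i div 2) bR2_2 else bT3_2 # replicate ((d i - 3) div 2) bR2_2)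
                    else replicate (d i) bT2_2) = d i"
        using c1 i by (auto simp: dimb_rep dimb_cons bsz_simps elim!: oddE)
      show "\<forall>x\<in>set (if p i = 2 then (if even (d i) then replicate (d i div 2) bS2_2 else bS3_2 # replicate ((d i - 3) div 2) bS2_2)
                    else if p i = 3 then (if even (d i) then replicate (d i div 2) bR2_2 else bT3_2 # replicate ((d i - 3) div 2) bR2_2)
                    else replicate (d i) bT2_2). good_blk 2 (int (p i)) x"
        using good_bS2_2 good_bS3_2 good_bR2_2 good_bT3_2 good_bT2_2[OF pr[OF i]] by auto
    qed simp
  next
    case c2
    show ?thesis
    proof (rule app[where m=3 and bsM="replicate (k div 2) (2, [[0, -1], [1, -1]])"
        and bl="\<lambda>i. replicate (d i) bN1_3"])
      show "tot (replicate (k div 2) (2, [[0, -1], [1, -1]])) = k" using c2 by (simp add: tot_rep)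
      show "\<forall>x\<in>set (replicate (k div 2) (2, [[0, -1], [1, -1]])). goodM 3 x" using goodM3 by simp
      fix i assume i: "i < n"
      show "dimb (replicate (d i) bN1_3) = d i" by (simp add: dimb_rep bsz_simps)
      show "\<forall>x\<in>set (replicate (d i) bN1_3). good_blk 3 (int (p i)) x"
        using good_bN1[OF pr[OF i], of 3] c2 i by (auto simp: bN1_3_def)
    qed simp
  next
    case c3 then show ?thesis using case3 by blast
  next
    case c4
    show ?thesis
    proof (rule app[where m=3 and bsM="replicate (k div 2) (2, [[0, -1], [1, -1]])"
        and bl="\<lambda>i. if p i = 2 then (if d i mod 3 = 0 then replicate (d i div 3) bS3_3
                      else if d i mod 3 = 1 then bS4_3 # replicate ((d i - 4) div 3) bS3_3
                      else bS5_3 # replicate ((d i - 5) div 3) bS3_3)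
                    else replicate (d i) bN1_3"])
      show "tot (replicate (k div 2) (2, [[0, -1], [1, -1]])) = k" using c4 by (simp add: tot_rep)
      show "\<forall>x\<in>set (replicate (k div 2) (2, [[0, -1], [1, -1]])). goodM 3 x" using goodM3 by simp
      fix i assume i: "i < n"
      show "dimb (if p i = 2 then (if d i mod 3 = 0 then replicate (d i div 3) bS3_3
                      else if d i mod 3 = 1 then bS4_3 # replicate ((d i - 4) div 3) bS3_3
                      else bS5_3 # replicate ((d i - 5) div 3) bS3_3)
                    else replicate (d i) bN1_3) = d i"
      proof (cases "p i = 2")
        case True
        then have d3: "3 \<le> d i" using c4 i by auto
        have "d i mod 3 = 1 \<Longrightarrow> 4 + (d i - 4) div 3 * 3 = d i" using d3 by presburger
        moreover have "d i mod 3 \<noteq> 0 \<Longrightarrow> d i mod 3 \<noteq> 1 \<Longrightarrow> 5 + (d i - 5) div 3 * 3 = d i" using d3 by presburger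
        ultimately show ?thesis using True by (auto simp: dimb_rep dimb_cons bsz_simps)
      qed (simp add: dimb_rep bsz_simps)
      show "\<forall>x\<in>set (if p i = 2 then (if d i mod 3 = 0 then replicate (d i div 3) bS3_3
                      else if d i mod 3 = 1 then bS4_3 # replicate ((d i - 4) div 3) bS3_3
                      else bS5_3 # replicate ((d i - 5) div 3) bS3_3)
                    else replicate (d i) bN1_3). good_blk 3 (int (p i)) x"
        using good_bS3_3 good_bS4_3 good_bS5_3 good_bN1[OF pr[OF i], of 3] by (auto simp: bN1_3_def)
    qed simp
  next
    case c5
    show ?thesis
    proof (cases "4 dvd k")
      case True then show ?thesis using case3 c5 by auto
    next
      case False
      show ?thesis
      proof (rule app[where m=35 and bsM="(6, [[0, 0, 0, 0, 0, -1], [1, 0, 0, 0, 0, -1], [0, 1, 0, 0, 0, -1], [0, 0, 1, 0, 0, -1], [0, 0, 0, 1, 0, -1], [0, 0, 0, 0, 1, -1]])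
              # replicate ((k - 6) div 4) (4, [[0, 0, 0, -1], [1, 0, 0, -1], [0, 1, 0, -1], [0, 0, 1, -1]])"
          and bl="\<lambda>i. if p i = 2 then (if even (d i) then replicate (d i div 2) bS2_35 else bS5_35 # replicate ((d i - 5) div 2) bS2_35)
                    else replicate (d i) bN1_35"])
        show "tot ((6, [[0, 0, 0, 0, 0, -1], [1, 0, 0, 0, 0, -1], [0, 1, 0, 0, 0, -1], [0, 0, 1, 0, 0, -1], [0, 0, 0, 1, 0, -1], [0, 0, 0, 0, 1, -1]])
              # replicate ((k - 6) div 4) (4, [[0, 0, 0, -1], [1, 0, 0, -1], [0, 1, 0, -1], [0, 0, 1, -1]])) = k"
        proof -
          have ek: "even k" "4 \<le> k" using c5 by auto
          have "6 + (k - 6) div 4 * 4 = k" using ek False by presburger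
          then show ?thesis by (simp add: tot_rep)
        qed
        show "\<forall>x\<in>set ((6, [[0, 0, 0, 0, 0, -1], [1, 0, 0, 0, 0, -1], [0, 1, 0, 0, 0, -1], [0, 0, 1, 0, 0, -1], [0, 0, 0, 1, 0, -1], [0, 0, 0, 0, 1, -1]])
              # replicate ((k - 6) div 4) (4, [[0, 0, 0, -1], [1, 0, 0, -1], [0, 1, 0, -1], [0, 0, 1, -1]])). goodM 35 x"
          using goodM5_35 goodM7_35 by simp
        fix i assume i: "i < n"
        show "dimb (if p i = 2 then (if even (d i) then replicate (d i div 2) bS2_35 else bS5_35 # replicate ((d i - 5) div 2) bS2_35)
                    else replicate (d i) bN1_35) = d i"
          using c5 i by (auto simp: dimb_rep dimb_cons bsz_simps elim!: oddE)
        show "\<forall>x\<in>set (if p i = 2 then (if even (d i) then replicate (d i div 2) bS2_35 else bS5_35 # replicate ((d i - 5) div 2) bS2_35)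
                    else replicate (d i) bN1_35). good_blk 35 (int (p i)) x"
          using good_bS2_35 good_bS5_35 good_bN1[OF pr[OF i], of 35] by (auto simp: bN1_35_def)
      qed simp
    qed
  qed
qed


end
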